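(* For all integers $a,b\ge1$, $\phi(p_{a,b})=-(-1)^{a+b}$.
   Context: $p_{a,b}=\sum_{i\in\mathbb{Z}}x_i^ax_{-i}^b$ in commuting variables $x_i$, $i\in\mathbb{Z}$. A signed graph is a finite graph (loops and multiple edges allowed) with $\mathrm{sgn}:E\to\{+,-\}$; a coloring $\kappa:V\to\mathbb{Z}$ is proper if $\kappa(u)\ne\mathrm{sgn}(e)\kappa(v)$ for every edge $e$ with endpoints $u,v$. An orientation assigns to each half-edge (a loop has two) an arrow toward or away from the vertex, such that on a positive edge exactly one of the two arrows points toward its vertex and on a negative edge both point toward or both point away. A cycle is a closed walk in which, considering only the edges of the walk, every vertex of the walk has at least one arrow pointing into it and one pointing out of it; an orientation is acyclic if it has no cycle; a sink is a vertex all of whose incident arrows point toward it (an isolated vertex is a sink). A signed poset is an acyclic orientation $P$ of a signed graph. A proper coloring $\kappa$ preserves $P$ if for every edge $e$ and each endpoint $v$ of $e$, with $u$ the other endpoint ($u=v$ for a loop), the arrow of $P$ at the incidence of $e$ with $v$ points toward $v$ iff $\kappa(v)>\mathrm{sgn}(e)\kappa(u)$. $Y_P=\sum_\kappa\prod_v x_{\kappa(v)}$ over proper colorings preserving $P$; $\mathbb{Y}$ is the $\mathbb{Q}$-span of all $Y_P$ (it is closed under products and contains $p_{a,b}$ for $a\ge1,b\ge0$ and $x_0$). $\phi:\mathbb{Y}\to\mathbb{Q}[t]$ is the (unique) $\mathbb{Q}$-linear map with $\phi(Y_P)=t^{\mathrm{sink}(P)}$, $\mathrm{sink}(P)$ the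 number of sinks of $P$ (its existence is established in the paper). *)

theory Defs
  imports Main "HOL-Library.Multiset" "HOL-Computational_Algebra.Polynomial"
begin

(* A signed edge (u, w, pos, au, aw):
   endpoints u, w (u = w for a loop); pos = True iff the sign is +;
   au = True iff the arrow at the incidence with u points toward u;
   aw = True iff the arrow at the incidence with w points toward w.
   A loop thus has two half-edges, both at u = w. *)
type_synonym sedge = "nat \<times> nat \<times> bool \<times> bool \<times> bool"

(* An oriented signed graph: vertices {0..<n}, finite list of edges
   (multiple edges and loops allowed). *)
type_synonym sgraph = "nat \<times> sedge list"

definition e_u :: "sedge \<Rightarrow> nat" where "e_u e = fst e"
definition e_w :: "sedge \<Rightarrow> nat" where "e_w e = fst (snd e)"
definition e_pos :: "sedge \<Rightarrow> bool" where "e_pos e = fst (snd (snd e))"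
definition e_au :: "sedge \<Rightarrow> bool" where "e_au e = fst (snd (snd (snd e)))"
definition e_aw :: "sedge \<Rightarrow> bool" where "e_aw e = snd (snd (snd (snd e)))"

definition e_sgn :: "sedge \<Rightarrow> int" where
  "e_sgn e = (if e_pos e then 1 else -1)"

definition is_oriented :: "sgraph \<Rightarrow> bool" where
  "is_oriented G \<longleftrightarrow> (\<forall>e\<in>set (snd G).
      e_u e < fst G \<and> e_w e < fst G \<and>
      (if e_pos e then e_au e \<noteq> e_aw e else e_au e = e_aw e))"

definition connects :: "sedge \<Rightarrow> nat \<Rightarrow> nat \<Rightarrow> bool" where
  "connects e x y \<longleftrightarrow> (e_u e = x \<and> e_w e = y) \<or> (e_u e = y \<and> e_w e = x)"

definition arrow_in :: "nat \<Rightarrow> sedge \<Rightarrow> bool" where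
  "arrow_in v e \<longleftrightarrow> (e_u e = v \<and> e_au e) \<or> (e_w e = v \<and> e_aw e)"
definition arrow_out :: "nat \<Rightarrow> sedge \<Rightarrow> bool" where
  "arrow_out v e \<longleftrightarrow> (e_u e = v \<and> \<not> e_au e) \<or> (e_w e = v \<and> \<not> e_aw e)"

definition closed_walk :: "sgraph \<Rightarrow> nat list \<Rightarrow> nat list \<Rightarrow> bool" where
  "closed_walk G vs es \<longleftrightarrow> vs \<noteq> [] \<and> length es = length vs \<and>
     (\<forall>i<length vs. es ! i < length (snd G) \<and>
        connects (snd G ! (es ! i)) (vs ! i) (vs ! (Suc i mod length vs)))"

definition is_cycle :: "sgraph \<Rightarrow> nat list \<Rightarrow> nat list \<Rightarrow> bool" where
  "is_cycle G vs es \<longleftrightarrow> closed_walk G vs es \<and>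
     (\<forall>v\<in>set vs. (\<exists>j\<in>set es. arrow_in v (snd G ! j)) \<and>
                  (\<exists>j\<in>set es. arrow_out v (snd G ! j)))"

definition signed_poset :: "sgraph \<Rightarrow> bool" where
  "signed_poset P \<longleftrightarrow> is_oriented P \<and> \<not> (\<exists>vs es. is_cycle P vs es)"

definition sinks :: "sgraph \<Rightarrow> nat" where
  "sinks P = card {v. v < fst P \<and>
      (\<forall>e\<in>set (snd P). (e_u e = v \<longrightarrow> e_au e) \<and> (e_w e = v \<longrightarrow> e_aw e))}"

definition proper :: "sgraph \<Rightarrow> int list \<Rightarrow> bool" where
  "proper G k \<longleftrightarrow> length k = fst G \<and>
     (\<forall>e\<in>set (snd G). k ! e_u e \<noteq> e_sgn e * k ! e_w e)"

definition preserves :: "sgraph \<Rightarrow> int list \<Rightarrow> bool" where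
  "preserves P k \<longleftrightarrow> (\<forall>e\<in>set (snd P).
      (e_au e \<longleftrightarrow> k ! e_u e > e_sgn e * k ! e_w e) \<and>
      (e_aw e \<longleftrightarrow> k ! e_w e > e_sgn e * k ! e_u e))"

(* Formal power series in commuting variables x_i (i in Z) are represented by their
   coefficient functions on monomials; a monomial is a finite multiset of indices. *)
type_synonym fps_Z = "int multiset \<Rightarrow> rat"

definition Y :: "sgraph \<Rightarrow> fps_Z" where
  "Y P m = of_nat (card {k. proper P k \<and> preserves P k \<and> mset k = m})"

(* p_{a,b} = sum_i x_i^a x_{-i}^b *)
definition p :: "nat \<Rightarrow> nat \<Rightarrow> fps_Z" where
  "p a b m = of_nat (card {i::int. replicate_mset a i + replicate_mset b (- i) = m})"

definition lin_comb :: "sgraph list \<Rightarrow> rat list \<Rightarrow> fps_Z" where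
  "lin_comb Ps cs = (\<lambda>m. \<Sum>j<length Ps. cs ! j * Y (Ps ! j) m)"

definition inY :: "fps_Z \<Rightarrow> bool" where
  "inY f \<longleftrightarrow> (\<exists>Ps cs. (\<forall>P\<in>set Ps. signed_poset P) \<and> length cs = length Ps \<and>
                      f = lin_comb Ps cs)"

(* phi: the Q-linear map with phi(Y_P) = t^sink(P); defined as the common value
   over all representations of f as a linear combination of Y_P's *)
definition phi :: "fps_Z \<Rightarrow> rat poly" where
  "phi f = (THE q. \<forall>Ps cs. (\<forall>P\<in>set Ps. signed_poset P) \<and> length cs = length Ps \<and>
                            f = lin_comb Ps cs \<longrightarrow>
                 q = (\<Sum>j<length Ps. monom (cs ! j) (sinks (Ps ! j))))"

end

theory Submission
  imports Defs "HOL-Library.FuncSet"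
begin

fun Xt :: "nat \<Rightarrow> (nat \<Rightarrow> 'a::comm_ring_1) \<Rightarrow> 'a" where
  "Xt 0 g = g 0"
| "Xt (Suc d) g = g 0 - Xt d (\<lambda>m. g (Suc m) - g m)"

lemma Xt_diff: "Xt d (\<lambda>m. f m - g m) = Xt d f - Xt d g"
proof (induction d arbitrary: f g)
  case (Suc d)
  have "Xt d (\<lambda>m. (f (Suc m) - g (Suc m)) - (f m - g m)) =
        Xt d (\<lambda>m. (f (Suc m) - f m) - (g (Suc m) - g m))" by (simp add: algebra_simps)
  also have "\<dots> = Xt d (\<lambda>m. f (Suc m) - f m) - Xt d (\<lambda>m. g (Suc m) - g m)" by (rule Suc)
  finally show ?case by simp
qed simp

lemma Xt_zero: "Xt d (\<lambda>m. 0) = 0"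
  by (induction d) simp_all

lemma Xt_cmult: "Xt d (\<lambda>m. c * f m) = c * Xt d f"
proof (induction d arbitrary: f)
  case (Suc d)
  have "Xt d (\<lambda>m. c * f (Suc m) - c * f m) = c * Xt d (\<lambda>m. f (Suc m) - f m)"
    using Suc[of "\<lambda>m. f (Suc m) - f m"] by (simp add: algebra_simps)
  then show ?case by (simp add: algebra_simps)
qed simp

lemma Xt_add: "Xt d (\<lambda>m. f m + g m) = Xt d f + Xt d g"
  using Xt_diff[of d "\<lambda>m. f m + g m" g] by simp

lemma Xt_sum: "finite I \<Longrightarrow> Xt d (\<lambda>m. \<Sum>i\<in>I. h i m) = (\<Sum>i\<in>I. Xt d (h i))"
  by (induction I rule: finite_induct) (simp_all add: Xt_zero Xt_add)

lemma Xt_const: "Xt d (\<lambda>m. c) = c"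
  by (induction d) (simp_all add: Xt_zero)

lemma Xt_id: "d \<ge> 1 \<Longrightarrow> Xt d (\<lambda>m. of_nat m) = -1"
  by (cases d) (simp_all add: Xt_const)

definition inS :: "nat set \<Rightarrow> sedge \<Rightarrow> bool" where
  "inS S e \<longleftrightarrow> e_u e \<in> S \<and> e_w e \<in> S"

definition okc :: "sedge list \<Rightarrow> nat set \<Rightarrow> (nat \<Rightarrow> int) \<Rightarrow> bool" where
  "okc E S k \<longleftrightarrow> (\<forall>e\<in>set E. inS S e \<longrightarrow> k (e_u e) \<noteq> e_sgn e * k (e_w e) \<and>
      (e_au e \<longleftrightarrow> k (e_u e) > e_sgn e * k (e_w e)) \<and>
      (e_aw e \<longleftrightarrow> k (e_w e) > e_sgn e * k (e_u e)))"

definition Col :: "sedge list \<Rightarrow> nat set \<Rightarrow> nat \<Rightarrow> (nat \<Rightarrow> int) set" where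
  "Col E S m = {k \<in> S \<rightarrow>\<^sub>E {- int m..int m}. okc E S k}"

definition snk :: "sedge list \<Rightarrow> nat set \<Rightarrow> nat set" where
  "snk E S = {v\<in>S. \<forall>e\<in>set E. inS S e \<longrightarrow> (e_u e = v \<longrightarrow> e_au e) \<and> (e_w e = v \<longrightarrow> e_aw e)}"

definition src :: "sedge list \<Rightarrow> nat set \<Rightarrow> nat set" where
  "src E S = {v\<in>S. \<forall>e\<in>set E. inS S e \<longrightarrow> (e_u e = v \<longrightarrow> \<not> e_au e) \<and> (e_w e = v \<longrightarrow> \<not> e_aw e)}"

definition orient :: "sedge list \<Rightarrow> bool" where
  "orient E \<longleftrightarrow> (\<forall>e\<in>set E. if e_pos e then e_au e \<noteq> e_aw e else e_au e = e_aw e)"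

definition VP :: "sedge list \<Rightarrow> nat set \<Rightarrow> (nat set \<times> nat set) set" where
  "VP E S = {(T,W). T \<subseteq> snk E S \<and> W \<subseteq> src E S \<and> T \<inter> W = {}}"

definition ext :: "nat set \<Rightarrow> nat set \<Rightarrow> int \<Rightarrow> (nat \<Rightarrow> int) \<Rightarrow> nat \<Rightarrow> int" where
  "ext T W M k = (\<lambda>v. if v \<in> T then M else if v \<in> W then - M else k v)"

lemma okc_mono: "S' \<subseteq> S \<Longrightarrow> okc E S k \<Longrightarrow> okc E S' k"
  unfolding okc_def inS_def by blast

lemma okc_cong: "(\<And>v. v \<in> S \<Longrightarrow> k v = k' v) \<Longrightarrow> okc E S k \<longleftrightarrow> okc E S k'"
  unfolding okc_def inS_def by auto

lemma edge_ok:
  fixes x y M :: int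
  assumes "M > 0"
    and "if pos then au \<noteq> aw else au = aw"
    and "s = (if pos then 1 else -1)"
    and "x = M \<or> x = -M \<or> \<bar>x\<bar> < M" and "y = M \<or> y = -M \<or> \<bar>y\<bar> < M"
    and "x = M \<Longrightarrow> au" and "x = -M \<Longrightarrow> \<not> au"
    and "y = M \<Longrightarrow> aw" and "y = -M \<Longrightarrow> \<not> aw"
    and "\<bar>x\<bar> < M \<Longrightarrow> \<bar>y\<bar> < M \<Longrightarrow> x \<noteq> s * y \<and> (au \<longleftrightarrow> x > s * y) \<and> (aw \<longleftrightarrow> y > s * x)"
  shows "x \<noteq> s * y \<and> (au \<longleftrightarrow> x > s * y) \<and> (aw \<longleftrightarrow> y > s * x)"
  using assms by (cases pos) (auto split: if_splits)


lemma cl1: assumes "v\<in>S" "\<forall>v\<in>W. k v = -M" "\<forall>v\<in>S-T-W. \<bar>k v\<bar> < M" "M > (0::int)" "k v = M"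
  shows "v\<in>T"
proof (rule ccontr)
  assume nT: "v\<notin>T"
  show False
  proof (cases "v\<in>W")
    case True then have "k v = -M" using assms(2) by blast
    with assms(4,5) show False by simp
  next
    case False then have "\<bar>k v\<bar> < M" using assms(1,3) nT by blast
    with assms(5) show False by simp
  qed
qed

lemma cl2: assumes "v\<in>S" "\<forall>v\<in>T. k v = M" "\<forall>v\<in>S-T-W. \<bar>k v\<bar> < M" "M > (0::int)" "k v = -M"
  shows "v\<in>W"
proof (rule ccontr)
  assume nW: "v\<notin>W"
  show False
  proof (cases "v\<in>T")
    case True then have "k v = M" using assms(2) by blast
    with assms(4,5) show False by simp
  next
    case False then have "\<bar>k v\<bar> < M" using assms(1,3) nW by blast
    with assms(5) show False by simp
  qed
qed

lemma peel:
  assumes or: "orient E" and TS: "T \<subseteq> S" and WS: "W \<subseteq> S" and TW: "T \<inter> W = {}"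
    and M: "M > (0::int)" and kT: "\<forall>v\<in>T. k v = M" and kW: "\<forall>v\<in>W. k v = - M"
    and kR: "\<forall>v\<in>S - T - W. \<bar>k v\<bar> < M"
  shows "okc E S k \<longleftrightarrow> okc E (S - T - W) k \<and> T \<subseteq> snk E S \<and> W \<subseteq> src E S"
proof
  assume ok: "okc E S k"
  have vals: "\<And>v. v \<in> S \<Longrightarrow> k v = M \<or> k v = -M \<or> \<bar>k v\<bar> < M"
    using kT kW kR by blast
  have "T \<subseteq> snk E S"
  proof
    fix v assume v: "v \<in> T"
    have "(e_u e = v \<longrightarrow> e_au e) \<and> (e_w e = v \<longrightarrow> e_aw e)" if e: "e \<in> set E" "inS S e" for e
    proof -
      have o: "k (e_u e) \<noteq> e_sgn e * k (e_w e) \<and> (e_au e \<longleftrightarrow> k (e_u e) > e_sgn e * k (e_w e)) \<and>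
          (e_aw e \<longleftrightarrow> k (e_w e) > e_sgn e * k (e_u e))" using ok e unfolding okc_def by blast
      have "k (e_u e) = M \<or> k (e_u e) = -M \<or> \<bar>k (e_u e)\<bar> < M"
           "k (e_w e) = M \<or> k (e_w e) = -M \<or> \<bar>k (e_w e)\<bar> < M"
        using vals e(2) unfolding inS_def by auto
      then show ?thesis using o kT v M unfolding e_sgn_def by (auto split: if_splits)
    qed
    then show "v \<in> snk E S" using v TS unfolding snk_def by auto
  qed
  moreover have "W \<subseteq> src E S"
  proof
    fix v assume v: "v \<in> W"
    have "(e_u e = v \<longrightarrow> \<not> e_au e) \<and> (e_w e = v \<longrightarrow> \<not> e_aw e)" if e: "e \<in> set E" "inS S e" for e
    proof -
      have o: "k (e_u e) \<noteq> e_sgn e * k (e_w e) \<and> (e_au e \<longleftrightarrow> k (e_u e) > e_sgn e * k (e_w e)) \<and>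
          (e_aw e \<longleftrightarrow> k (e_w e) > e_sgn e * k (e_u e))" using ok e unfolding okc_def by blast
      have "k (e_u e) = M \<or> k (e_u e) = -M \<or> \<bar>k (e_u e)\<bar> < M"
           "k (e_w e) = M \<or> k (e_w e) = -M \<or> \<bar>k (e_w e)\<bar> < M"
        using vals e(2) unfolding inS_def by auto
      then show ?thesis using o kW v M unfolding e_sgn_def by (auto split: if_splits)
    qed
    then show "v \<in> src E S" using v WS unfolding src_def by auto
  qed
  ultimately show "okc E (S - T - W) k \<and> T \<subseteq> snk E S \<and> W \<subseteq> src E S"
    using okc_mono[OF _ ok] by blast
next
  assume "okc E (S - T - W) k \<and> T \<subseteq> snk E S \<and> W \<subseteq> src E S"
  then have okR: "okc E (S - T - W) k" and sT: "T \<subseteq> snk E S" and sW: "W \<subseteq> src E S" by auto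
  show "okc E S k" unfolding okc_def
  proof (intro ballI impI)
    fix e assume e: "e \<in> set E" "inS S e"
    have eu: "e_u e \<in> S" and ew: "e_w e \<in> S" using e(2) unfolding inS_def by auto
    show "k (e_u e) \<noteq> e_sgn e * k (e_w e) \<and> (e_au e \<longleftrightarrow> k (e_u e) > e_sgn e * k (e_w e)) \<and>
          (e_aw e \<longleftrightarrow> k (e_w e) > e_sgn e * k (e_u e))"
    proof (rule edge_ok[where pos = "e_pos e" and M = M])
      show "M > 0" by (rule M)
      show "if e_pos e then e_au e \<noteq> e_aw e else e_au e = e_aw e" using or e(1) unfolding orient_def by blast
      show "e_sgn e = (if e_pos e then 1 else -1)" by (simp add: e_sgn_def)
      show "k (e_u e) = M \<or> k (e_u e) = -M \<or> \<bar>k (e_u e)\<bar> < M" using eu kT kW kR by blast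
      show "k (e_w e) = M \<or> k (e_w e) = -M \<or> \<bar>k (e_w e)\<bar> < M" using ew kT kW kR by blast
      show "k (e_u e) = M \<Longrightarrow> e_au e"
      proof -
        assume "k (e_u e) = M"
        then have "e_u e \<in> T" using cl1[OF eu kW kR M] by blast
        then show "e_au e" using sT e unfolding snk_def by blast
      qed
      show "k (e_u e) = -M \<Longrightarrow> \<not> e_au e"
      proof -
        assume "k (e_u e) = -M"
        then have "e_u e \<in> W" using cl2[OF eu kT kR M] by blast
        then show "\<not> e_au e" using sW e unfolding src_def by blast
      qed
      show "k (e_w e) = M \<Longrightarrow> e_aw e"
      proof -
        assume "k (e_w e) = M"
        then have "e_w e \<in> T" using cl1[OF ew kW kR M] by blast
        then show "e_aw e" using sT e unfolding snk_def by blast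
      qed
      show "k (e_w e) = -M \<Longrightarrow> \<not> e_aw e"
      proof -
        assume "k (e_w e) = -M"
        then have "e_w e \<in> W" using cl2[OF ew kT kR M] by blast
        then show "\<not> e_aw e" using sW e unfolding src_def by blast
      qed
      show "\<bar>k (e_u e)\<bar> < M \<Longrightarrow> \<bar>k (e_w e)\<bar> < M \<Longrightarrow> k (e_u e) \<noteq> e_sgn e * k (e_w e) \<and>
          (e_au e \<longleftrightarrow> k (e_u e) > e_sgn e * k (e_w e)) \<and> (e_aw e \<longleftrightarrow> k (e_w e) > e_sgn e * k (e_u e))"
      proof -
        assume a: "\<bar>k (e_u e)\<bar> < M" "\<bar>k (e_w e)\<bar> < M"
        have "e_u e \<notin> T" "e_w e \<notin> T" using a kT by auto
        moreover have "e_u e \<notin> W" "e_w e \<notin> W" using a kW by auto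
        ultimately have "inS (S - T - W) e" using eu ew unfolding inS_def by blast
        then show ?thesis using okR e(1) unfolding okc_def by blast
      qed
    qed
  qed
qed

lemma finite_Col: "finite S \<Longrightarrow> finite (Col E S m)"
  unfolding Col_def by (rule finite_subset[of _ "S \<rightarrow>\<^sub>E {- int m..int m}"]) (auto intro: finite_PiE)

lemma finite_VP: "finite S \<Longrightarrow> finite (VP E S)"
  unfolding VP_def snk_def src_def
  by (rule finite_subset[of _ "Pow S \<times> Pow S"]) auto

definition hh :: "int \<Rightarrow> (nat set \<times> nat set) \<times> (nat \<Rightarrow> int) \<Rightarrow> nat \<Rightarrow> int" where
  "hh M x = ext (fst (fst x)) (snd (fst x)) M (snd x)"

definition hinv :: "nat set \<Rightarrow> int \<Rightarrow> (nat \<Rightarrow> int) \<Rightarrow> (nat set \<times> nat set) \<times> (nat \<Rightarrow> int)" where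
  "hinv S M k = (({v\<in>S. k v = M}, {v\<in>S. k v = - M}),
                 restrict k (S - {v\<in>S. k v = M} - {v\<in>S. k v = - M}))"

lemma bij_peel:
  assumes or: "orient E"
  shows "bij_betw (hh (int (Suc m))) (Sigma (VP E S) (\<lambda>TW. Col E (S - fst TW - snd TW) m))
           (Col E S (Suc m))"
proof (rule bij_betw_byWitness[where f' = "hinv S (int (Suc m))"])
  let ?M = "int (Suc m)"
  show "\<forall>a\<in>Sigma (VP E S) (\<lambda>TW. Col E (S - fst TW - snd TW) m). hinv S ?M (hh ?M a) = a"
  proof
    fix a assume a: "a \<in> Sigma (VP E S) (\<lambda>TW. Col E (S - fst TW - snd TW) m)"
    obtain T W k where aa: "a = ((T,W),k)" by (metis prod.collapse)
    have TW: "T \<subseteq> S" "W \<subseteq> S" "T \<inter> W = {}" using a aa unfolding VP_def snk_def src_def by auto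
    have k: "k \<in> (S - T - W) \<rightarrow>\<^sub>E {- int m..int m}" using a aa unfolding Col_def by auto
    have 1: "{v\<in>S. ext T W ?M k v = ?M} = T"
      using TW k by (auto simp: ext_def PiE_def Pi_def)
    have 2: "{v\<in>S. ext T W ?M k v = - ?M} = W"
      using TW k by (auto simp: ext_def PiE_def Pi_def)
    have 3: "restrict (ext T W ?M k) (S - T - W) = k"
      using k by (auto simp: ext_def restrict_def PiE_def extensional_def)
    show "hinv S ?M (hh ?M a) = a" unfolding hinv_def hh_def aa using 1 2 3 by simp
  qed
  show "\<forall>a'\<in>Col E S (Suc m). hh ?M (hinv S ?M a') = a'"
  proof
    fix k assume "k \<in> Col E S (Suc m)"
    then have k: "k \<in> S \<rightarrow>\<^sub>E {- ?M..?M}" unfolding Col_def by auto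
    show "hh ?M (hinv S ?M k) = k"
    proof
      fix v show "hh ?M (hinv S ?M k) v = k v"
        using k by (cases "v \<in> S") (auto simp: hh_def hinv_def ext_def PiE_def extensional_def)
    qed
  qed
  show "hh ?M ` Sigma (VP E S) (\<lambda>TW. Col E (S - fst TW - snd TW) m) \<subseteq> Col E S (Suc m)"
  proof
    fix y assume "y \<in> hh ?M ` Sigma (VP E S) (\<lambda>TW. Col E (S - fst TW - snd TW) m)"
    then obtain T W k where y: "y = ext T W ?M k" and tw: "(T,W) \<in> VP E S"
      and kc: "k \<in> Col E (S - T - W) m" by (auto simp: hh_def)
    have TW: "T \<subseteq> S" "W \<subseteq> S" "T \<inter> W = {}" "T \<subseteq> snk E S" "W \<subseteq> src E S"
      using tw unfolding VP_def snk_def src_def by auto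
    have k: "k \<in> (S - T - W) \<rightarrow>\<^sub>E {- int m..int m}" and ok: "okc E (S - T - W) k"
      using kc unfolding Col_def by auto
    have okR: "okc E (S - T - W) y"
      using ok by (rule iffD1[OF okc_cong, rotated]) (auto simp: y ext_def)
    have "okc E S y"
    proof (subst peel[OF or TW(1,2,3)])
      show "?M > 0" by simp
      show "\<forall>v\<in>T. y v = ?M" by (simp add: y ext_def)
      show "\<forall>v\<in>W. y v = - ?M" using TW(3) by (auto simp: y ext_def)
      show "\<forall>v\<in>S - T - W. \<bar>y v\<bar> < ?M"
      proof
        fix v assume v: "v \<in> S - T - W"
        have "k v \<in> {- int m..int m}" using PiE_mem[OF k v] .
        then show "\<bar>y v\<bar> < ?M" using v by (simp add: y ext_def abs_less_iff)
      qed
      show "okc E (S - T - W) y \<and> T \<subseteq> snk E S \<and> W \<subseteq> src E S" using okR TW by blast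
    qed
    moreover have "y \<in> S \<rightarrow>\<^sub>E {- ?M..?M}"
    proof (rule PiE_I)
      fix v assume v: "v \<in> S"
      show "y v \<in> {- ?M..?M}"
      proof (cases "v \<in> S - T - W")
        case True
        have "k v \<in> {- int m..int m}" using PiE_mem[OF k True] .
        then show ?thesis using True by (simp add: y ext_def)
      qed (use v in \<open>auto simp: y ext_def\<close>)
    next
      fix v assume v: "v \<notin> S"
      then show "y v = undefined" using k TW by (auto simp: y ext_def PiE_def extensional_def)
    qed
    ultimately show "y \<in> Col E S (Suc m)" unfolding Col_def by simp
  qed
  show "hinv S ?M ` Col E S (Suc m) \<subseteq> Sigma (VP E S) (\<lambda>TW. Col E (S - fst TW - snd TW) m)"
  proof
    fix x assume "x \<in> hinv S ?M ` Col E S (Suc m)"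
    then obtain k where x: "x = hinv S ?M k" and kc: "k \<in> Col E S (Suc m)" by auto
    define T where "T = {v\<in>S. k v = ?M}"
    define W where "W = {v\<in>S. k v = - ?M}"
    have k: "k \<in> S \<rightarrow>\<^sub>E {- ?M..?M}" and ok: "okc E S k" using kc unfolding Col_def by auto
    have TW: "T \<subseteq> S" "W \<subseteq> S" "T \<inter> W = {}" unfolding T_def W_def by auto
    have R: "\<forall>v\<in>S - T - W. \<bar>k v\<bar> < ?M"
    proof
      fix v assume v: "v \<in> S - T - W"
      have "k v \<in> {- ?M..?M}" using PiE_mem[OF k] v by blast
      then show "\<bar>k v\<bar> < ?M" using v unfolding T_def W_def by auto
    qed
    have kT: "\<forall>v\<in>T. k v = ?M" unfolding T_def by auto
    have kW: "\<forall>v\<in>W. k v = - ?M" unfolding W_def by auto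
    have Mp: "?M > 0" by simp
    have pe: "okc E (S - T - W) k \<and> T \<subseteq> snk E S \<and> W \<subseteq> src E S"
      using peel[OF or TW(1) TW(2) TW(3) Mp kT kW R] ok by blast
    have "restrict k (S - T - W) \<in> (S - T - W) \<rightarrow>\<^sub>E {- int m..int m}"
    proof (rule restrict_PiE_iff[THEN iffD2], rule ballI)
      fix v assume "v \<in> S - T - W"
      then have "\<bar>k v\<bar> < ?M" using R by blast
      then show "k v \<in> {- int m..int m}" by (simp add: abs_less_iff)
    qed
    moreover have "okc E (S - T - W) (restrict k (S - T - W)) = okc E (S - T - W) k"
      by (rule okc_cong) simp
    moreover have "x = ((T, W), restrict k (S - T - W))"
      unfolding x hinv_def T_def W_def by simp
    ultimately show "x \<in> Sigma (VP E S) (\<lambda>TW. Col E (S - fst TW - snd TW) m)"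
      using pe TW unfolding VP_def Col_def by auto
  qed
qed

lemma sum_peel:
  assumes or: "orient E" and fin: "finite S"
  shows "(\<Sum>k\<in>Col E S (Suc m). g k) =
         (\<Sum>TW\<in>VP E S. \<Sum>k\<in>Col E (S - fst TW - snd TW) m. g (ext (fst TW) (snd TW) (int (Suc m)) k))"
proof -
  have "(\<Sum>TW\<in>VP E S. \<Sum>k\<in>Col E (S - fst TW - snd TW) m. g (ext (fst TW) (snd TW) (int (Suc m)) k))
     = (\<Sum>x\<in>Sigma (VP E S) (\<lambda>TW. Col E (S - fst TW - snd TW) m). g (hh (int (Suc m)) x))"
    by (subst sum.Sigma) (auto simp: finite_VP finite_Col fin hh_def split_def)
  also have "\<dots> = (\<Sum>k\<in>Col E S (Suc m). g k)"
    by (rule sum.reindex_bij_betw[OF bij_peel[OF or]])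
  finally show ?thesis by simp
qed

lemma alt_sum: "finite A \<Longrightarrow> (\<Sum>X\<in>Pow A. (-1::'a::comm_ring_1) ^ card X) = (if A = {} then 1 else 0)"
proof -
  assume fA: "finite A"
  have "(\<Prod>x\<in>A. (1::'a) - 1) = (\<Sum>X\<in>Pow A. (-1) ^ card X * (\<Prod>x\<in>X. 1) * (\<Prod>x\<in>A-X. 1))"
    by (rule prod_diff_conv_sum[OF fA])
  then show ?thesis using fA by (cases "A = {}") (auto simp: zero_power card_gt_0_iff)
qed

lemma alt_sum': "finite A \<Longrightarrow> (\<Sum>X\<in>Pow A. (-1::'a::comm_ring_1) ^ card (A - X)) = (if A = {} then 1 else 0)"
proof -
  assume fA: "finite A"
  have "(\<Prod>x\<in>A. (1::'a) - 1) = (\<Sum>X\<in>Pow A. (-1) ^ (card A - card X) * (\<Prod>x\<in>X. 1) * (\<Prod>x\<in>A-X. 1))"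
    by (rule prod_diff_conv_sum'[OF fA])
  moreover have "(\<Sum>X\<in>Pow A. (-1::'a) ^ (card A - card X)) = (\<Sum>X\<in>Pow A. (-1) ^ card (A - X))"
    by (rule sum.cong) (auto simp: card_Diff_subset finite_subset[OF _ fA])
  ultimately show ?thesis using fA by (cases "A = {}") (auto simp: zero_power card_gt_0_iff)
qed

lemma neg1_pow_diff: "b \<le> a \<Longrightarrow> (-1::'a::comm_ring_1) ^ (a - b) = (-1) ^ a * (-1) ^ b"
proof -
  assume "b \<le> a"
  then have "(-1::'a) ^ a * (-1) ^ b = (-1) ^ (a - b) * ((-1) ^ b * (-1) ^ b)"
    by (metis le_add_diff_inverse2 mult.assoc power_add)
  also have "(-1::'a) ^ b * (-1) ^ b = 1" by (simp flip: power_add add: power_mult[symmetric] mult_2[symmetric])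
  finally show ?thesis by simp
qed

definition PP :: "nat set \<Rightarrow> nat set \<Rightarrow> (nat set \<times> nat set) set" where
  "PP A B = {(T,W). T \<subseteq> A \<and> W \<subseteq> B \<and> T \<inter> W = {}}"

lemma PP_Sigma: "PP A B = Sigma (Pow A) (\<lambda>T. Pow (B - T))"
  unfolding PP_def by auto

lemma PP_swap: "PP A B = (\<lambda>(W,T). (T,W)) ` PP B A"
  unfolding PP_def by auto

definition sg :: "nat set \<Rightarrow> nat set \<times> nat set \<Rightarrow> 'a::comm_ring_1" where
  "sg S TW = (-1) ^ card (S - fst TW - snd TW)"

lemma sg_sym: "(\<Sum>TW\<in>PP A B. sg S TW :: 'a::comm_ring_1) = (\<Sum>TW\<in>PP B A. sg S TW)"
proof -
  have "inj_on (\<lambda>(W,T). (T,W)) (PP B A)" by (auto intro: inj_onI)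
  then have "(\<Sum>TW\<in>PP A B. sg S TW :: 'a) = (\<Sum>TW\<in>PP B A. sg S ((\<lambda>(W,T). (T,W)) TW))"
    by (subst PP_swap) (simp add: sum.reindex)
  also have "\<dots> = (\<Sum>TW\<in>PP B A. sg S TW)"
    by (rule sum.cong) (auto simp: sg_def Diff_eq Int_ac)
  finally show ?thesis .
qed

lemma sg_zero1:
  assumes fS: "finite S" and AS: "A \<subseteq> S" and BS: "B \<subseteq> S" and v: "v \<in> B" "v \<notin> A"
  shows "(\<Sum>TW\<in>PP A B. sg S TW :: 'a::comm_ring_1) = 0"
proof -
  have "(\<Sum>TW\<in>PP A B. sg S TW :: 'a) = (\<Sum>T\<in>Pow A. \<Sum>W\<in>Pow (B - T). sg S (T,W))"
    unfolding PP_Sigma using fS AS BS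
    by (subst sum.Sigma) (auto intro: finite_subset)
  also have "\<dots> = (\<Sum>T\<in>Pow A. 0)"
  proof (rule sum.cong[OF refl])
    fix T assume T: "T \<in> Pow A"
    have fB: "finite (B - T)" using fS BS by (auto intro: finite_subset)
    have "(\<Sum>W\<in>Pow (B - T). sg S (T,W) :: 'a) = (\<Sum>W\<in>Pow (B - T). (-1) ^ card (S - T) * (-1) ^ card W)"
    proof (rule sum.cong[OF refl])
      fix W assume W: "W \<in> Pow (B - T)"
      have "S - T - W = (S - T) - W" by auto
      moreover have "card ((S - T) - W) = card (S - T) - card W"
        using W BS fS by (intro card_Diff_subset) (auto intro: finite_subset)
      moreover have "card W \<le> card (S - T)"
        using W BS fS by (intro card_mono) auto
      ultimately show "sg S (T,W) = (-1) ^ card (S - T) * (-1) ^ card W"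
        by (simp add: sg_def neg1_pow_diff)
    qed
    also have "\<dots> = (-1) ^ card (S - T) * (\<Sum>W\<in>Pow (B - T). (-1) ^ card W)"
      by (simp add: sum_distrib_left)
    also have "\<dots> = 0"
    proof -
      have "B - T \<noteq> {}" using v T by auto
      then show ?thesis using alt_sum[OF fB, where 'a = 'a] by simp
    qed
    finally show "(\<Sum>W\<in>Pow (B - T). sg S (T,W) :: 'a) = 0" .
  qed
  finally show ?thesis by simp
qed

lemma sg_zero2:
  assumes fS: "finite S" and AS: "A \<subseteq> S" and BS: "B \<subseteq> S" and v: "v \<in> A" "v \<notin> B"
  shows "(\<Sum>TW\<in>PP A B. sg S TW :: 'a::comm_ring_1) = 0"
  using sg_zero1[OF fS BS AS v] sg_sym by metis

lemma sg_one:
  assumes fS: "finite S"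
  shows "(\<Sum>TW\<in>PP S S. sg S TW :: 'a::comm_ring_1) = 1"
proof -
  have "(\<Sum>TW\<in>PP S S. sg S TW :: 'a) = (\<Sum>T\<in>Pow S. \<Sum>W\<in>Pow (S - T). sg S (T,W))"
    unfolding PP_Sigma using fS
    by (subst sum.Sigma) (auto intro: finite_subset)
  also have "\<dots> = (\<Sum>T\<in>Pow S. if T = S then 1 else 0)"
  proof (rule sum.cong[OF refl])
    fix T assume T: "T \<in> Pow S"
    have "(\<Sum>W\<in>Pow (S - T). sg S (T,W) :: 'a) = (\<Sum>W\<in>Pow (S - T). (-1) ^ card ((S - T) - W))"
      by (rule sum.cong) (auto simp: sg_def Diff_eq Int_ac)
    also have "\<dots> = (if S - T = {} then 1 else 0)" using fS by (intro alt_sum') auto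
    also have "\<dots> = (if T = S then 1 else 0)" using T by auto
    finally show "(\<Sum>W\<in>Pow (S - T). sg S (T,W) :: 'a) = (if T = S then 1 else 0)" .
  qed
  also have "\<dots> = 1" using fS by (simp add: sum.delta')
  finally show ?thesis .
qed

definition good :: "sedge list \<Rightarrow> nat set \<Rightarrow> bool" where
  "good E V \<longleftrightarrow> (\<forall>S \<subseteq> V. (\<exists>e\<in>set E. inS S e) \<longrightarrow>
     (\<exists>v\<in>snk E S \<union> src E S. \<exists>e\<in>set E. inS S e \<and> (e_u e = v \<or> e_w e = v)))"

lemma VP_PP: "VP E S = PP (snk E S) (src E S)"
  unfolding VP_def PP_def by simp

lemma snk_sub: "snk E S \<subseteq> S" and src_sub: "src E S \<subseteq> S"
  unfolding snk_def src_def by auto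

lemma sign_identity:
  assumes fS: "finite S" and g: "good E V" and SV: "S \<subseteq> V"
  shows "(\<Sum>TW\<in>VP E S. sg S TW :: 'a::comm_ring_1) = (if \<exists>e\<in>set E. inS S e then 0 else 1)"
proof (cases "\<exists>e\<in>set E. inS S e")
  case True
  then obtain v e where v: "v \<in> snk E S \<union> src E S" and e: "e \<in> set E" "inS S e" "e_u e = v \<or> e_w e = v"
    using g SV unfolding good_def by blast
  show ?thesis
  proof (cases "v \<in> snk E S")
    case True
    have "v \<notin> src E S" using True e unfolding snk_def src_def by auto
    then have "(\<Sum>TW\<in>PP (snk E S) (src E S). sg S TW :: 'a) = 0"
      using sg_zero2[OF fS snk_sub src_sub True] by blast
    then show ?thesis using \<open>\<exists>e\<in>set E. inS S e\<close> by (simp add: VP_PP)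
  next
    case False
    then have "v \<in> src E S" using v by blast
    then have "(\<Sum>TW\<in>PP (snk E S) (src E S). sg S TW :: 'a) = 0"
      using sg_zero1[OF fS snk_sub src_sub _ False] by blast
    then show ?thesis using \<open>\<exists>e\<in>set E. inS S e\<close> by (simp add: VP_PP)
  qed
next
  case False
  then have "snk E S = S" "src E S = S" unfolding snk_def src_def by auto
  then show ?thesis using False sg_one[OF fS] by (simp add: VP_PP)
qed

lemma Col0:
  assumes fS: "finite S"
  shows "card (Col E S 0) = (if \<exists>e\<in>set E. inS S e then 0 else 1)"
proof (cases "\<exists>e\<in>set E. inS S e")
  case True
  then obtain e where e: "e \<in> set E" "inS S e" by blast
  have "Col E S 0 = {}"
  proof (rule ccontr)
    assume "Col E S 0 \<noteq> {}"
    then obtain k where k: "k \<in> S \<rightarrow>\<^sub>E {0..0}" "okc E S k" unfolding Col_def by auto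
    have "k (e_u e) = 0" "k (e_w e) = 0" using e(2) PiE_mem[OF k(1)] unfolding inS_def by auto
    then show False using k(2) e unfolding okc_def by auto
  qed
  then show ?thesis using True by simp
next
  case False
  then have "Col E S 0 = S \<rightarrow>\<^sub>E {0..0}" unfolding Col_def okc_def by auto
  then show ?thesis using False fS by (simp add: card_PiE)
qed

lemma Col_rec:
  assumes or: "orient E" and fS: "finite S"
  shows "(of_nat (card (Col E S (Suc m))) :: 'a::comm_ring_1) =
         (\<Sum>TW\<in>VP E S. of_nat (card (Col E (S - fst TW - snd TW) m)))"
proof -
  have "card (Col E S (Suc m)) = (\<Sum>k\<in>Col E S (Suc m). 1)" by simp
  also have "\<dots> = (\<Sum>TW\<in>VP E S. \<Sum>k\<in>Col E (S - fst TW - snd TW) m. 1)"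
    by (rule sum_peel[OF or fS])
  also have "\<dots> = (\<Sum>TW\<in>VP E S. card (Col E (S - fst TW - snd TW) m))" by simp
  finally show ?thesis by (simp add: of_nat_sum)
qed

lemma Xt_Col:
  assumes or: "orient E" and g: "good E V" and fV: "finite V"
  shows "S \<subseteq> V \<Longrightarrow> card S \<le> d \<Longrightarrow>
         Xt d (\<lambda>m. of_nat (card (Col E S m)) :: 'a::comm_ring_1) = (-1) ^ card S"
proof (induction d arbitrary: S)
  case 0
  then have "S = {}" using fV by (metis card_0_eq finite_subset le_zero_eq)
  then show ?case using Col0[of "{}" E] by (simp add: inS_def)
next
  case (Suc d)
  have fS: "finite S" using Suc.prems fV by (auto intro: finite_subset)
  have fVP: "finite (VP E S)" by (rule finite_VP[OF fS])
  have e0: "({},{}) \<in> VP E S" unfolding VP_def by auto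
  let ?g = "\<lambda>m. of_nat (card (Col E S m)) :: 'a"
  let ?R = "VP E S - {({},{})}"
  have diff: "?g (Suc m) - ?g m = (\<Sum>TW\<in>?R. of_nat (card (Col E (S - fst TW - snd TW) m)))" for m
    using Col_rec[OF or fS, of m, where 'a='a] sum.remove[OF fVP e0, of "\<lambda>TW. of_nat (card (Col E (S - fst TW - snd TW) m)) :: 'a"]
    by simp
  have "Xt d (\<lambda>m. ?g (Suc m) - ?g m) = Xt d (\<lambda>m. \<Sum>TW\<in>?R. of_nat (card (Col E (S - fst TW - snd TW) m)))"
    by (simp only: diff)
  also have "\<dots> = (\<Sum>TW\<in>?R. Xt d (\<lambda>m. of_nat (card (Col E (S - fst TW - snd TW) m))))"
    by (rule Xt_sum) (use fVP in simp)
  also have "\<dots> = (\<Sum>TW\<in>?R. sg S TW)"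
  proof (rule sum.cong[OF refl])
    fix TW assume TW: "TW \<in> ?R"
    have s1: "fst TW \<subseteq> snk E S" "snd TW \<subseteq> src E S" using TW unfolding VP_def by auto
    have sub: "fst TW \<subseteq> S" "snd TW \<subseteq> S" "fst TW \<noteq> {} \<or> snd TW \<noteq> {}"
      using s1 snk_sub[of E S] src_sub[of E S] TW by (auto simp: prod_eq_iff)
    have "S - fst TW - snd TW \<subset> S" using sub by blast
    then have "card (S - fst TW - snd TW) < card S" using fS by (simp add: psubset_card_mono)
    then have "card (S - fst TW - snd TW) \<le> d" using Suc.prems by simp
    moreover have "S - fst TW - snd TW \<subseteq> V" using Suc.prems by blast
    ultimately show "Xt d (\<lambda>m. of_nat (card (Col E (S - fst TW - snd TW) m)) :: 'a) = sg S TW"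
      using Suc.IH unfolding sg_def by blast
  qed
  also have "\<dots> = (\<Sum>TW\<in>VP E S. sg S TW) - sg S ({},{})"
    using sum.remove[OF fVP e0, of "sg S :: _ \<Rightarrow> 'a"] by (simp add: algebra_simps)
  also have "\<dots> = (if \<exists>e\<in>set E. inS S e then 0 else 1) - (-1) ^ card S"
    using sign_identity[OF fS g Suc.prems(1)] by (simp add: sg_def)
  finally have X: "Xt d (\<lambda>m. ?g (Suc m) - ?g m) = (if \<exists>e\<in>set E. inS S e then 0 else 1) - (-1) ^ card S" .
  have "?g 0 = (if \<exists>e\<in>set E. inS S e then 0 else 1)" using Col0[OF fS, of E] by simp
  then show ?case using X by simp
qed

definition Inc :: "sedge list \<Rightarrow> nat set \<Rightarrow> nat \<Rightarrow> nat \<Rightarrow> bool" where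
  "Inc E S v j \<longleftrightarrow> j < length E \<and> inS S (E ! j) \<and> (e_u (E ! j) = v \<or> e_w (E ! j) = v)"

definition oth :: "nat \<Rightarrow> sedge \<Rightarrow> nat" where
  "oth v e = (if e_u e = v then e_w e else e_u e)"

definition stp :: "sedge list \<Rightarrow> nat set \<Rightarrow> nat \<times> nat \<Rightarrow> nat \<times> nat" where
  "stp E S x = (let v = fst x; j = snd x;
      j' = (SOME j'. Inc E S v j' \<and> (if arrow_in v (E ! j) then arrow_out v (E ! j') else arrow_in v (E ! j')))
     in (oth v (E ! j'), j'))"

lemma Inc_oth: "Inc E S v j \<Longrightarrow> Inc E S (oth v (E ! j)) j"
  unfolding Inc_def oth_def by auto

lemma Inc_connects: "Inc E S v j \<Longrightarrow> connects (E ! j) v (oth v (E ! j))"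
  unfolding Inc_def oth_def connects_def by auto

lemma notin_out: "Inc E S v j \<Longrightarrow> \<not> arrow_in v (E ! j) \<Longrightarrow> arrow_out v (E ! j)"
  unfolding Inc_def arrow_in_def arrow_out_def by auto

lemma stp_props:
  assumes H: "\<forall>v j. Inc E S v j \<longrightarrow> (\<exists>j'. Inc E S v j' \<and> arrow_in v (E ! j')) \<and> (\<exists>j'. Inc E S v j' \<and> arrow_out v (E ! j'))"
    and I: "Inc E S v j"
  shows "Inc E S v (snd (stp E S (v,j))) \<and> fst (stp E S (v,j)) = oth v (E ! snd (stp E S (v,j))) \<and>
         (if arrow_in v (E ! j) then arrow_out v (E ! snd (stp E S (v,j))) else arrow_in v (E ! snd (stp E S (v,j))))"
proof -
  have ex: "\<exists>j'. Inc E S v j' \<and> (if arrow_in v (E ! j) then arrow_out v (E ! j') else arrow_in v (E ! j'))"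
    using H I by auto
  define j' where "j' = (SOME j'. Inc E S v j' \<and> (if arrow_in v (E ! j) then arrow_out v (E ! j') else arrow_in v (E ! j')))"
  have sj: "stp E S (v,j) = (oth v (E ! j'), j')" unfolding stp_def Let_def j'_def by simp
  have "Inc E S v j' \<and> (if arrow_in v (E ! j) then arrow_out v (E ! j') else arrow_in v (E ! j'))"
    unfolding j'_def by (rule someI_ex[OF ex])
  then show ?thesis unfolding sj by simp
qed

lemma signed_poset_good:
  assumes sp: "signed_poset P"
  shows "good (snd P) {0..<fst P}"
  unfolding good_def
proof (intro allI impI)
  fix S assume SV: "S \<subseteq> {0..<fst P}" and ed: "\<exists>e\<in>set (snd P). inS S e"
  let ?E = "snd P"
  show "\<exists>v\<in>snk ?E S \<union> src ?E S. \<exists>e\<in>set ?E. inS S e \<and> (e_u e = v \<or> e_w e = v)"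
  proof (rule ccontr)
    assume nc: "\<not> ?thesis"
    have H: "(\<exists>j'. Inc ?E S v j' \<and> arrow_in v (?E ! j')) \<and> (\<exists>j'. Inc ?E S v j' \<and> arrow_out v (?E ! j'))"
      if I: "Inc ?E S v j" for v j
    proof -
      have vS: "v \<in> S" using I unfolding Inc_def inS_def by auto
      have inc: "\<exists>e\<in>set ?E. inS S e \<and> (e_u e = v \<or> e_w e = v)"
        using I unfolding Inc_def by (auto intro: nth_mem)
      have "v \<notin> snk ?E S" using nc inc by blast
      then obtain e where e: "e \<in> set ?E" "inS S e" "arrow_out v e"
        using vS unfolding snk_def arrow_out_def by blast
      have "v \<notin> src ?E S" using nc inc by blast
      then obtain e' where e': "e' \<in> set ?E" "inS S e'" "arrow_in v e'"
        using vS unfolding src_def arrow_in_def by blast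
      obtain a where a: "a < length ?E" "?E ! a = e" using e(1) by (metis in_set_conv_nth)
      obtain b where b: "b < length ?E" "?E ! b = e'" using e'(1) by (metis in_set_conv_nth)
      have "Inc ?E S v a" using a e unfolding Inc_def arrow_out_def by auto
      moreover have "Inc ?E S v b" using b e' unfolding Inc_def arrow_in_def by auto
      ultimately show ?thesis using a b e e' by blast
    qed
    have H': "\<forall>v j. Inc ?E S v j \<longrightarrow> (\<exists>j'. Inc ?E S v j' \<and> arrow_in v (?E ! j')) \<and> (\<exists>j'. Inc ?E S v j' \<and> arrow_out v (?E ! j'))"
      using H by blast
    obtain e0 where e0: "e0 \<in> set ?E" "inS S e0" using ed by blast
    obtain j0 where j0: "j0 < length ?E" "?E ! j0 = e0" using e0(1) by (metis in_set_conv_nth)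
    have I0: "Inc ?E S (e_u e0) j0" using j0 e0 unfolding Inc_def by auto
    define f where "f k = (stp ?E S ^^ k) (e_u e0, j0)" for k
    have fS: "f (Suc k) = stp ?E S (f k)" for k unfolding f_def by simp
    have Inv: "Inc ?E S (fst (f k)) (snd (f k))" for k
    proof (induction k)
      case 0 then show ?case using I0 by (simp add: f_def)
    next
      case (Suc k)
      have "f k = (fst (f k), snd (f k))" by simp
      then have st: "stp ?E S (f k) = stp ?E S (fst (f k), snd (f k))" by simp
      have p: "Inc ?E S (fst (f k)) (snd (stp ?E S (fst (f k), snd (f k)))) \<and>
          fst (stp ?E S (fst (f k), snd (f k))) = oth (fst (f k)) (?E ! snd (stp ?E S (fst (f k), snd (f k))))"
        using stp_props[OF H' Suc] by blast
      show ?case unfolding fS st using Inc_oth[OF conjunct1[OF p]] p by simp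
    qed
    have Step: "connects (?E ! snd (f (Suc k))) (fst (f k)) (fst (f (Suc k))) \<and>
       (if arrow_in (fst (f k)) (?E ! snd (f k)) then arrow_out (fst (f k)) (?E ! snd (f (Suc k)))
        else arrow_in (fst (f k)) (?E ! snd (f (Suc k))))" for k
    proof -
      have st: "f (Suc k) = stp ?E S (fst (f k), snd (f k))" by (simp add: fS)
      have p: "Inc ?E S (fst (f k)) (snd (f (Suc k))) \<and> fst (f (Suc k)) = oth (fst (f k)) (?E ! snd (f (Suc k))) \<and>
         (if arrow_in (fst (f k)) (?E ! snd (f k)) then arrow_out (fst (f k)) (?E ! snd (f (Suc k)))
          else arrow_in (fst (f k)) (?E ! snd (f (Suc k))))"
        unfolding st using stp_props[OF H' Inv[of k]] by blast
      then show ?thesis using Inc_connects[of ?E S "fst (f k)" "snd (f (Suc k))"] by simp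
    qed
    define X where "X = S \<times> {0..<length ?E}"
    have finX: "finite X" unfolding X_def using SV by (auto intro: finite_subset)
    have fX: "f k \<in> X" for k using Inv[of k] unfolding X_def Inc_def inS_def
      by (cases "e_u (?E ! snd (f k)) = fst (f k)") (auto simp: mem_Times_iff)
    have "\<not> inj_on f {0..card X}"
    proof
      assume "inj_on f {0..card X}"
      then have "card {0..card X} \<le> card X" using fX finX by (intro card_inj_on_le) auto
      then show False by simp
    qed
    then obtain i l where il: "i < l" "f i = f l"
      unfolding inj_on_def by (metis atLeastAtMost_iff linorder_neqE_nat)
    define L where "L = l - i"
    have L0: "L > 0" using il unfolding L_def by simp
    define vs where "vs = map (\<lambda>t. fst (f (i + t))) [0..<L]"
    define es where "es = map (\<lambda>t. snd (f (Suc (i + t)))) [0..<L]"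
    have wrap: "fst (f (i + (Suc t mod L))) = fst (f (Suc (i + t)))" if t: "t < L" for t
    proof (cases "Suc t < L")
      case True then show ?thesis by simp
    next
      case False
      then have "Suc t = L" using t by simp
      then have "Suc (i + t) = l" "Suc t mod L = 0" unfolding L_def using il by auto
      then show ?thesis using il by simp
    qed
    have cw: "closed_walk P vs es"
      unfolding closed_walk_def
    proof (intro conjI allI impI)
      show "vs \<noteq> []" using L0 unfolding vs_def by simp
      show "length es = length vs" unfolding vs_def es_def by simp
      fix t assume t: "t < length vs"
      then have tL: "t < L" unfolding vs_def by simp
      show "es ! t < length ?E" using Inv[of "Suc (i + t)"] tL unfolding es_def Inc_def by simp
      have "vs ! (Suc t mod length vs) = fst (f (i + (Suc t mod L)))"
        unfolding vs_def using L0 by simp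
      then show "connects (?E ! (es ! t)) (vs ! t) (vs ! (Suc t mod length vs))"
        using Step[of "i + t"] wrap[OF tL] tL unfolding vs_def es_def by simp
    qed
    have prev: "\<exists>s<L. es ! s = snd (f (i + t))" if tL: "t < L" for t
    proof (cases t)
      case 0
      have "es ! (L - 1) = snd (f l)" unfolding es_def using L0 il unfolding L_def by simp
      then show ?thesis using 0 il L0 by (intro exI[of _ "L - 1"]) auto
    next
      case (Suc t')
      then show ?thesis using tL unfolding es_def by (intro exI[of _ t']) auto
    qed
    have "is_cycle P vs es"
      unfolding is_cycle_def
    proof (intro conjI ballI)
      show "closed_walk P vs es" by (rule cw)
      fix v assume "v \<in> set vs"
      then obtain t where tL: "t < L" and v: "v = fst (f (i + t))" unfolding vs_def by auto
      obtain s where s: "s < L" "es ! s = snd (f (i + t))" using prev[OF tL] by blast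
      have ins: "snd (f (i + t)) \<in> set es" using s by (metis length_map length_upt minus_nat.diff_0 nth_mem es_def)
      have nxt: "snd (f (Suc (i + t))) \<in> set es" using tL unfolding es_def by auto
      have St: "if arrow_in v (?E ! snd (f (i + t))) then arrow_out v (?E ! snd (f (Suc (i + t))))
          else arrow_in v (?E ! snd (f (Suc (i + t))))" using Step[of "i + t"] v by simp
      have Iv: "Inc ?E S v (snd (f (i + t)))" using Inv[of "i + t"] v by simp
      show "\<exists>j\<in>set es. arrow_in v (?E ! j)"
        using St ins nxt by (cases "arrow_in v (?E ! snd (f (i + t)))") auto
      show "\<exists>j\<in>set es. arrow_out v (?E ! j)"
        using St ins nxt notin_out[OF Iv] by (cases "arrow_in v (?E ! snd (f (i + t)))") auto
    qed
    then show False using sp unfolding signed_poset_def by blast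
  qed
qed

lemma smult_sum_right: "finite I \<Longrightarrow> smult c (\<Sum>i\<in>I. f i) = (\<Sum>i\<in>I. smult c (f i))"
  by (induction I rule: finite_induct) (simp_all add: smult_add_right)

lemma Xt_smult: "Xt d (\<lambda>m. smult c (f m)) = smult c (Xt d f)"
proof (induction d arbitrary: f)
  case (Suc d)
  have "Xt d (\<lambda>m. smult c (f (Suc m)) - smult c (f m)) = smult c (Xt d (\<lambda>m. f (Suc m) - f m))"
    using Suc[of "\<lambda>m. f (Suc m) - f m"] by (simp add: smult_diff_right)
  then show ?case by (simp add: smult_diff_right)
qed simp

definition Rng :: "nat \<Rightarrow> int set" where "Rng m = {- (int m + 1)..int m + 1}"

definition wt :: "nat \<Rightarrow> int \<Rightarrow> rat poly" where
  "wt m c = (if c = int m + 1 then [:-1, 1:] else if c = - (int m + 1) then 0 else -1)"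

definition Wm :: "nat \<Rightarrow> int multiset \<Rightarrow> rat poly" where
  "Wm m M = prod_mset (image_mset (wt m) M)"

definition Ms :: "nat \<Rightarrow> nat \<Rightarrow> int multiset set" where
  "Ms D m = mset ` {xs. set xs \<subseteq> Rng m \<and> length xs \<le> D}"

definition Vf :: "nat \<Rightarrow> fps_Z \<Rightarrow> nat \<Rightarrow> rat poly" where
  "Vf D f m = (\<Sum>M\<in>Ms D m. smult (f M) (Wm m M))"

lemma finite_Ms: "finite (Ms D m)"
  unfolding Ms_def Rng_def by (intro finite_imageI finite_lists_length_le) simp

lemma mem_Ms: "M \<in> Ms D m \<longleftrightarrow> size M \<le> D \<and> set_mset M \<subseteq> Rng m"
proof
  assume "M \<in> Ms D m" then show "size M \<le> D \<and> set_mset M \<subseteq> Rng m" unfolding Ms_def by auto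
next
  assume a: "size M \<le> D \<and> set_mset M \<subseteq> Rng m"
  obtain xs where "mset xs = M" using ex_mset by blast
  then show "M \<in> Ms D m" using a unfolding Ms_def by force
qed

definition Lst :: "sgraph \<Rightarrow> nat \<Rightarrow> int list set" where
  "Lst P m = {k. proper P k \<and> preserves P k \<and> set k \<subseteq> Rng m}"

lemma finite_Lst: "finite (Lst P m)"
proof (rule finite_subset)
  show "Lst P m \<subseteq> {xs. set xs \<subseteq> Rng m \<and> length xs = fst P}" unfolding Lst_def proper_def by auto
  show "finite {xs. set xs \<subseteq> Rng m \<and> length xs = fst P}"
    by (rule finite_lists_length_eq) (simp add: Rng_def)
qed

lemma G1:
  assumes "fst P \<le> D"
  shows "Vf D (Y P) m = (\<Sum>k\<in>Lst P m. Wm m (mset k))"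
proof -
  have "(\<Sum>k\<in>Lst P m. Wm m (mset k)) = (\<Sum>M\<in>Ms D m. \<Sum>k\<in>{k \<in> Lst P m. mset k = M}. Wm m (mset k))"
  proof (rule sum.group[symmetric, OF finite_Lst finite_Ms])
    show "mset ` Lst P m \<subseteq> Ms D m" using assms unfolding Lst_def proper_def by (auto simp: mem_Ms)
  qed
  also have "\<dots> = (\<Sum>M\<in>Ms D m. smult (Y P M) (Wm m M))"
  proof (rule sum.cong[OF refl])
    fix M assume M: "M \<in> Ms D m"
    have eq: "{k. proper P k \<and> preserves P k \<and> mset k = M} = {k \<in> Lst P m. mset k = M}"
      using M unfolding Lst_def by (auto simp: mem_Ms)
    have "(\<Sum>k\<in>{k \<in> Lst P m. mset k = M}. Wm m (mset k)) = (\<Sum>k\<in>{k \<in> Lst P m. mset k = M}. Wm m M)"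
      by (rule sum.cong) auto
    also have "\<dots> = of_nat (card {k \<in> Lst P m. mset k = M}) * Wm m M" by simp
    also have "\<dots> = smult (Y P M) (Wm m M)"
      unfolding Y_def eq by (simp add: of_nat_mult_conv_smult)
    finally show "(\<Sum>k\<in>{k \<in> Lst P m. mset k = M}. Wm m (mset k)) = smult (Y P M) (Wm m M)" .
  qed
  finally show ?thesis unfolding Vf_def by simp
qed

lemma Wm_map: "Wm m (mset (map k [0..<n])) = (\<Prod>v\<in>{0..<n}. wt m (k v))"
proof -
  have "Wm m (mset (map k [0..<n])) = prod_list (map (\<lambda>v. wt m (k v)) [0..<n])"
    unfolding Wm_def by (simp add: prod_mset_prod_list comp_def flip: mset_map)
  also have "\<dots> = (\<Prod>v\<in>set [0..<n]. wt m (k v))"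
    by (rule prod.distinct_set_conv_list[symmetric]) simp
  finally show ?thesis by simp
qed

lemma okc_list:
  assumes or: "is_oriented P"
  shows "okc (snd P) {0..<fst P} k \<longleftrightarrow> proper P (map k [0..<fst P]) \<and> preserves P (map k [0..<fst P])"
proof -
  have ed: "\<And>e. e \<in> set (snd P) \<Longrightarrow> e_u e < fst P \<and> e_w e < fst P"
    using or unfolding is_oriented_def by blast
  have nth: "\<And>e. e \<in> set (snd P) \<Longrightarrow> map k [0..<fst P] ! e_u e = k (e_u e) \<and> map k [0..<fst P] ! e_w e = k (e_w e)"
    using ed by simp
  show ?thesis
    unfolding okc_def proper_def preserves_def inS_def using ed nth by auto
qed

lemma orient_of: "is_oriented P \<Longrightarrow> orient (snd P)"
  unfolding is_oriented_def orient_def by blast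

lemma bij_list:
  assumes or: "is_oriented P"
  shows "bij_betw (\<lambda>k. map k [0..<fst P]) (Col (snd P) {0..<fst P} (Suc m)) (Lst P m)"
proof (rule bij_betw_byWitness[where f' = "\<lambda>xs v. if v < fst P then xs ! v else undefined"])
  let ?n = "fst P"
  show "\<forall>a\<in>Col (snd P) {0..<?n} (Suc m). (\<lambda>v. if v < ?n then map a [0..<?n] ! v else undefined) = a"
  proof
    fix a assume "a \<in> Col (snd P) {0..<?n} (Suc m)"
    then have "a \<in> {0..<?n} \<rightarrow>\<^sub>E {- int (Suc m)..int (Suc m)}" unfolding Col_def by auto
    then show "(\<lambda>v. if v < ?n then map a [0..<?n] ! v else undefined) = a"
      by (auto simp: PiE_def extensional_def)
  qed
  show "\<forall>a'\<in>Lst P m. map (\<lambda>v. if v < ?n then a' ! v else undefined) [0..<?n] = a'"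
  proof
    fix xs assume "xs \<in> Lst P m"
    then have "length xs = ?n" unfolding Lst_def proper_def by auto
    then show "map (\<lambda>v. if v < ?n then xs ! v else undefined) [0..<?n] = xs"
      by (simp add: list_eq_iff_nth_eq)
  qed
  show "(\<lambda>k. map k [0..<?n]) ` Col (snd P) {0..<?n} (Suc m) \<subseteq> Lst P m"
  proof
    fix xs assume "xs \<in> (\<lambda>k. map k [0..<?n]) ` Col (snd P) {0..<?n} (Suc m)"
    then obtain k where xs: "xs = map k [0..<?n]" and k: "k \<in> {0..<?n} \<rightarrow>\<^sub>E {- int (Suc m)..int (Suc m)}"
      and ok: "okc (snd P) {0..<?n} k" unfolding Col_def by auto
    have "set xs \<subseteq> Rng m" using k unfolding xs Rng_def by (auto simp: PiE_def Pi_def)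
    then show "xs \<in> Lst P m" using okc_list[OF or] ok unfolding Lst_def xs by auto
  qed
  show "(\<lambda>xs v. if v < ?n then xs ! v else undefined) ` Lst P m \<subseteq> Col (snd P) {0..<?n} (Suc m)"
  proof
    fix k assume "k \<in> (\<lambda>xs v. if v < ?n then xs ! v else undefined) ` Lst P m"
    then obtain xs where k: "k = (\<lambda>v. if v < ?n then xs ! v else undefined)" and xs: "xs \<in> Lst P m" by auto
    have len: "length xs = ?n" using xs unfolding Lst_def proper_def by auto
    have mk: "map k [0..<?n] = xs" using len unfolding k by (simp add: list_eq_iff_nth_eq)
    have "k \<in> {0..<?n} \<rightarrow>\<^sub>E {- int (Suc m)..int (Suc m)}"
    proof (rule PiE_I)
      fix v assume "v \<in> {0..<?n}"
      then have "xs ! v \<in> set xs" using len by simp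
      then show "k v \<in> {- int (Suc m)..int (Suc m)}" using xs \<open>v \<in> {0..<?n}\<close>
        unfolding k Lst_def Rng_def by auto
    qed (simp add: k)
    moreover have "okc (snd P) {0..<?n} k" using okc_list[OF or, of k] xs unfolding mk Lst_def by auto
    ultimately show "k \<in> Col (snd P) {0..<?n} (Suc m)" unfolding Col_def by simp
  qed
qed

lemma G2:
  assumes or: "is_oriented P"
  shows "(\<Sum>k\<in>Lst P m. Wm m (mset k)) = (\<Sum>k\<in>Col (snd P) {0..<fst P} (Suc m). \<Prod>v\<in>{0..<fst P}. wt m (k v))"
proof -
  have "(\<Sum>k\<in>Col (snd P) {0..<fst P} (Suc m). Wm m (mset (map k [0..<fst P]))) = (\<Sum>k\<in>Lst P m. Wm m (mset k))"
    by (rule sum.reindex_bij_betw[OF bij_list[OF or]])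
  then show ?thesis by (simp only: Wm_map)
qed

lemma a1_monom: "[:-1, 1:] + 1 = (monom 1 1 :: rat poly)"
  by (simp add: monom_altdef one_pCons)

lemma pow_sum_prod: "finite A \<Longrightarrow> (\<Sum>X\<in>Pow A. (q::rat poly) ^ card X) = (\<Prod>v\<in>A. q + 1)"
proof -
  assume fA: "finite A"
  have "(\<Prod>v\<in>A. q + 1) = (\<Sum>X\<in>Pow A. (\<Prod>x\<in>X. q) * (\<Prod>x\<in>A - X. 1))" by (rule prod_add[OF fA])
  then show ?thesis by simp
qed

lemma wt_top: "wt m (int (Suc m)) = [:-1, 1:]" unfolding wt_def by simp
lemma wt_bot: "wt m (- int (Suc m)) = 0" unfolding wt_def by simp
lemma wt_mid: "\<bar>c\<bar> \<le> int m \<Longrightarrow> wt m c = -1" unfolding wt_def by auto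

lemma prod_ext:
  assumes k: "k \<in> Col E (V - T - W) m" and TV: "T \<subseteq> V" and WV: "W \<subseteq> V" and fV: "finite V"
    and TW: "T \<inter> W = {}"
  shows "(\<Prod>v\<in>V. wt m (ext T W (int (Suc m)) k v)) =
         (if W = {} then [:-1, 1:] ^ card T * (-1) ^ card (V - T) else 0)"
proof (cases "W = {}")
  case False
  then obtain w where w: "w \<in> W" by blast
  then have "w \<notin> T" using TW by blast
  then have "wt m (ext T W (int (Suc m)) k w) = 0" using w by (simp add: ext_def wt_def)
  then have "(\<Prod>v\<in>V. wt m (ext T W (int (Suc m)) k v)) = 0" using w WV fV by (intro prod_zero) auto
  then show ?thesis using False by simp
next
  case True
  have kk: "k \<in> (V - T - W) \<rightarrow>\<^sub>E {- int m..int m}" using k unfolding Col_def by auto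
  have "(\<Prod>v\<in>V. wt m (ext T W (int (Suc m)) k v)) = (\<Prod>v\<in>V. if v \<in> T then [:-1, 1:] else -1)"
  proof (rule prod.cong[OF refl])
    fix v assume v: "v \<in> V"
    show "wt m (ext T W (int (Suc m)) k v) = (if v \<in> T then [:-1, 1:] else -1)"
    proof (cases "v \<in> T")
      case True then show ?thesis by (simp add: ext_def wt_def)
    next
      case False
      then have "k v \<in> {- int m..int m}" using PiE_mem[OF kk] v \<open>W = {}\<close> by auto
      then have "\<bar>k v\<bar> \<le> int m" by auto
      then show ?thesis using False \<open>W = {}\<close> by (simp add: ext_def wt_mid)
    qed
  qed
  also have "\<dots> = [:-1, 1:] ^ card (V \<inter> {v. v \<in> T}) * (-1) ^ card (V \<inter> - {v. v \<in> T})"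
    using fV by (simp add: prod.If_cases)
  also have "V \<inter> {v. v \<in> T} = T" using TV by blast
  also have "V \<inter> - {v. v \<in> T} = V - T" by blast
  finally show ?thesis using True by simp
qed

lemma sinks_snk: "is_oriented P \<Longrightarrow> sinks P = card (snk (snd P) {0..<fst P})"
  unfolding sinks_def snk_def is_oriented_def inS_def
  by (rule arg_cong[where f = card]) auto

lemma perP:
  assumes sp: "signed_poset P" and nD: "fst P \<le> D"
  shows "Xt D (Vf D (Y P)) = monom 1 (sinks P)"
proof -
  let ?E = "snd P" and ?V = "{0..<fst P}" and ?a = "[:-1, 1:] :: rat poly"
  have io: "is_oriented P" using sp unfolding signed_poset_def by blast
  have or: "orient ?E" by (rule orient_of[OF io])
  have gd: "good ?E ?V" by (rule signed_poset_good[OF sp])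
  define c where "c (TW :: nat set \<times> nat set) = (if snd TW = {} then ?a ^ card (fst TW) * (-1) ^ card (?V - fst TW) else 0)" for TW
  have VPsub: "fst TW \<subseteq> ?V \<and> snd TW \<subseteq> ?V \<and> fst TW \<inter> snd TW = {}" if "TW \<in> VP ?E ?V" for TW
    using that snk_sub[of ?E ?V] src_sub[of ?E ?V] unfolding VP_def by auto
  have V: "Vf D (Y P) m = (\<Sum>TW\<in>VP ?E ?V. c TW * of_nat (card (Col ?E (?V - fst TW - snd TW) m)))" for m
  proof -
    have "Vf D (Y P) m = (\<Sum>k\<in>Col ?E ?V (Suc m). \<Prod>v\<in>?V. wt m (k v))"
      using G1[OF nD] G2[OF io] by simp
    also have "\<dots> = (\<Sum>TW\<in>VP ?E ?V. \<Sum>k\<in>Col ?E (?V - fst TW - snd TW) m.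
                        \<Prod>v\<in>?V. wt m (ext (fst TW) (snd TW) (int (Suc m)) k v))"
      by (rule sum_peel[OF or]) simp
    also have "\<dots> = (\<Sum>TW\<in>VP ?E ?V. \<Sum>k\<in>Col ?E (?V - fst TW - snd TW) m. c TW)"
    proof (intro sum.cong refl)
      fix TW k assume TW: "TW \<in> VP ?E ?V" and k: "k \<in> Col ?E (?V - fst TW - snd TW) m"
      show "(\<Prod>v\<in>?V. wt m (ext (fst TW) (snd TW) (int (Suc m)) k v)) = c TW"
        using prod_ext[OF k] VPsub[OF TW] unfolding c_def by simp
    qed
    also have "\<dots> = (\<Sum>TW\<in>VP ?E ?V. c TW * of_nat (card (Col ?E (?V - fst TW - snd TW) m)))"
      by (simp add: mult.commute)
    finally show ?thesis .
  qed
  have "Xt D (Vf D (Y P)) = Xt D (\<lambda>m. \<Sum>TW\<in>VP ?E ?V. c TW * of_nat (card (Col ?E (?V - fst TW - snd TW) m)))"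
    using V by presburger
  also have "\<dots> = (\<Sum>TW\<in>VP ?E ?V. Xt D (\<lambda>m. c TW * of_nat (card (Col ?E (?V - fst TW - snd TW) m))))"
    by (rule Xt_sum) (simp add: finite_VP)
  also have "\<dots> = (\<Sum>TW\<in>VP ?E ?V. c TW * (-1) ^ card (?V - fst TW - snd TW))"
  proof (rule sum.cong[OF refl])
    fix TW assume TW: "TW \<in> VP ?E ?V"
    have "card (?V - fst TW - snd TW) \<le> card ?V" by (rule card_mono) auto
    then have cd: "card (?V - fst TW - snd TW) \<le> D" using nD by simp
    show "Xt D (\<lambda>m. c TW * of_nat (card (Col ?E (?V - fst TW - snd TW) m))) = c TW * (-1) ^ card (?V - fst TW - snd TW)"
    proof -
      have "Xt D (\<lambda>m. of_nat (card (Col ?E (?V - fst TW - snd TW) m)) :: rat poly) = (-1) ^ card (?V - fst TW - snd TW)"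
        by (rule Xt_Col[OF or gd _ _ cd]) auto
      then show ?thesis by (simp add: Xt_cmult)
    qed
  qed
  also have "\<dots> = (\<Sum>TW\<in>VP ?E ?V. if snd TW = {} then ?a ^ card (fst TW) else 0)"
  proof (rule sum.cong[OF refl])
    fix TW assume TW: "TW \<in> VP ?E ?V"
    have "((-1::rat poly) ^ card (?V - fst TW)) * (-1) ^ card (?V - fst TW) = 1"
      by (simp flip: power_add add: power_mult[symmetric] mult_2[symmetric])
    then show "c TW * (-1) ^ card (?V - fst TW - snd TW) = (if snd TW = {} then ?a ^ card (fst TW) else 0)"
      unfolding c_def by (simp add: mult.assoc)
  qed
  also have "\<dots> = (\<Sum>T\<in>Pow (snk ?E ?V). \<Sum>W\<in>Pow (src ?E ?V - T). if W = {} then ?a ^ card T else 0)"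
  proof -
    define h where "h TW = (if snd TW = {} then ?a ^ card (fst TW) else 0)" for TW :: "nat set \<times> nat set"
    have f1: "finite (Pow (snk ?E ?V))" using finite_subset[OF snk_sub[of ?E ?V]] by simp
    have f2: "\<forall>T\<in>Pow (snk ?E ?V). finite (Pow (src ?E ?V - T))" using finite_subset[OF src_sub[of ?E ?V]] by simp
    have "(\<Sum>T\<in>Pow (snk ?E ?V). \<Sum>W\<in>Pow (src ?E ?V - T). h (T,W)) = (\<Sum>(T,W)\<in>Sigma (Pow (snk ?E ?V)) (\<lambda>T. Pow (src ?E ?V - T)). h (T,W))"
      by (rule sum.Sigma[OF f1 f2])
    then have "(\<Sum>TW\<in>VP ?E ?V. h TW) = (\<Sum>T\<in>Pow (snk ?E ?V). \<Sum>W\<in>Pow (src ?E ?V - T). h (T,W))"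
      unfolding VP_PP PP_Sigma by (simp add: case_prod_beta')
    then show ?thesis unfolding h_def fst_conv snd_conv .
  qed
  also have "\<dots> = (\<Sum>T\<in>Pow (snk ?E ?V). ?a ^ card T)"
  proof (rule sum.cong[OF refl])
    fix T assume "T \<in> Pow (snk ?E ?V)"
    have fin: "finite (Pow (src ?E ?V - T))" using finite_subset[OF src_sub[of ?E ?V]] by simp
    show "(\<Sum>W\<in>Pow (src ?E ?V - T). if W = {} then ?a ^ card T else 0) = ?a ^ card T"
      using sum.delta[OF fin, of "{}" "\<lambda>_. ?a ^ card T"] by simp
  qed
  also have "\<dots> = (\<Prod>v\<in>snk ?E ?V. ?a + 1)"
    by (rule pow_sum_prod[OF finite_subset[OF snk_sub[of ?E ?V]]]) simp
  also have "\<dots> = monom 1 1 ^ card (snk ?E ?V)"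
    by (simp only: a1_monom prod_constant)
  also have "\<dots> = monom 1 (sinks P)" by (simp add: monom_power sinks_snk[OF io])
  finally show ?thesis .
qed

lemma Vf_lin: "Vf D (lin_comb Ps cs) m = (\<Sum>j<length Ps. smult (cs ! j) (Vf D (Y (Ps ! j)) m))"
proof -
  have "Vf D (lin_comb Ps cs) m = (\<Sum>M\<in>Ms D m. \<Sum>j<length Ps. smult (cs ! j) (smult (Y (Ps ! j) M) (Wm m M)))"
    unfolding Vf_def lin_comb_def by (simp add: smult_sum)
  also have "\<dots> = (\<Sum>j<length Ps. \<Sum>M\<in>Ms D m. smult (cs ! j) (smult (Y (Ps ! j) M) (Wm m M)))"
    by (rule sum.swap)
  also have "\<dots> = (\<Sum>j<length Ps. smult (cs ! j) (Vf D (Y (Ps ! j)) m))"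
    unfolding Vf_def by (simp add: smult_sum_right finite_Ms)
  finally show ?thesis .
qed

lemma Xt_lin:
  assumes "\<forall>P\<in>set Ps. signed_poset P" and "\<forall>P\<in>set Ps. fst P \<le> D"
  shows "Xt D (Vf D (lin_comb Ps cs)) = (\<Sum>j<length Ps. monom (cs ! j) (sinks (Ps ! j)))"
proof -
  have "Xt D (Vf D (lin_comb Ps cs)) = Xt D (\<lambda>m. \<Sum>j<length Ps. smult (cs ! j) (Vf D (Y (Ps ! j)) m))"
    by (rule arg_cong[where f = "Xt D"], rule ext, rule Vf_lin)
  also have "\<dots> = (\<Sum>j<length Ps. Xt D (\<lambda>m. smult (cs ! j) (Vf D (Y (Ps ! j)) m)))"
    by (rule Xt_sum) simp
  also have "\<dots> = (\<Sum>j<length Ps. smult (cs ! j) (monom 1 (sinks (Ps ! j))))"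
  proof (rule sum.cong[OF refl])
    fix j assume "j \<in> {..<length Ps}"
    then have "Ps ! j \<in> set Ps" by simp
    then have "Xt D (Vf D (Y (Ps ! j))) = monom 1 (sinks (Ps ! j))"
      using perP assms by blast
    then show "Xt D (\<lambda>m. smult (cs ! j) (Vf D (Y (Ps ! j)) m)) = smult (cs ! j) (monom 1 (sinks (Ps ! j)))"
      by (simp add: Xt_smult)
  qed
  also have "\<dots> = (\<Sum>j<length Ps. monom (cs ! j) (sinks (Ps ! j)))" by (simp add: smult_monom)
  finally show ?thesis .
qed

definition Rp :: "nat \<Rightarrow> nat \<Rightarrow> int \<Rightarrow> int multiset" where
  "Rp a b i = replicate_mset a i + replicate_mset b (- i)"

lemma Vf_p:
  assumes a: "a \<ge> 1" and b: "b \<ge> 1" and D: "a + b \<le> D"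
  shows "Vf D (p a b) m = of_nat (2 * m + 1) * (-1) ^ (a + b)"
proof -
  have fR: "finite (Rng m)" by (simp add: Rng_def)
  have "(\<Sum>i\<in>Rng m. Wm m (Rp a b i)) = (\<Sum>M\<in>Ms D m. \<Sum>i\<in>{i \<in> Rng m. Rp a b i = M}. Wm m (Rp a b i))"
  proof (rule sum.group[symmetric, OF fR finite_Ms])
    show "Rp a b ` Rng m \<subseteq> Ms D m"
    proof
      fix M assume "M \<in> Rp a b ` Rng m"
      then obtain i where i: "i \<in> Rng m" "M = Rp a b i" by auto
      have "- i \<in> Rng m" using i(1) unfolding Rng_def by auto
      then show "M \<in> Ms D m" using i D unfolding mem_Ms Rp_def by auto
    qed
  qed
  also have "\<dots> = (\<Sum>M\<in>Ms D m. smult (p a b M) (Wm m M))"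
  proof (rule sum.cong[OF refl])
    fix M assume M: "M \<in> Ms D m"
    have eq: "{i. Rp a b i = M} = {i \<in> Rng m. Rp a b i = M}"
    proof -
      have "i \<in> Rng m" if "Rp a b i = M" for i
      proof -
        have "i \<in># M" using that a unfolding Rp_def by (auto simp: in_replicate_mset)
        then show ?thesis using M unfolding mem_Ms by auto
      qed
      then show ?thesis by auto
    qed
    have "(\<Sum>i\<in>{i \<in> Rng m. Rp a b i = M}. Wm m (Rp a b i)) = (\<Sum>i\<in>{i \<in> Rng m. Rp a b i = M}. Wm m M)"
      by (rule sum.cong) auto
    also have "\<dots> = smult (p a b M) (Wm m M)"
      unfolding p_def Rp_def[symmetric] eq by (simp add: of_nat_mult_conv_smult)
    finally show "(\<Sum>i\<in>{i \<in> Rng m. Rp a b i = M}. Wm m (Rp a b i)) = smult (p a b M) (Wm m M)" .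
  qed
  finally have 1: "Vf D (p a b) m = (\<Sum>i\<in>Rng m. Wm m (Rp a b i))" unfolding Vf_def by simp
  have 2: "Wm m (Rp a b i) = (if \<bar>i\<bar> \<le> int m then (-1) ^ (a + b) else 0)" if i: "i \<in> Rng m" for i
  proof -
    have W: "Wm m (Rp a b i) = wt m i ^ a * wt m (- i) ^ b"
      unfolding Wm_def Rp_def by simp
    show ?thesis
    proof (cases "\<bar>i\<bar> \<le> int m")
      case True
      then have "wt m i = -1" "wt m (-i) = -1" by (auto simp: wt_mid)
      then show ?thesis using True W by (simp add: power_add)
    next
      case False
      then have "i = int m + 1 \<or> i = - (int m + 1)" using i unfolding Rng_def by auto
      then have "wt m i = 0 \<or> wt m (-i) = 0" unfolding wt_def by auto
      then show ?thesis using False W a b by (auto simp: zero_power)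
    qed
  qed
  have "(\<Sum>i\<in>Rng m. Wm m (Rp a b i)) = (\<Sum>i\<in>Rng m. if \<bar>i\<bar> \<le> int m then (-1) ^ (a + b) else 0)"
    using 2 by (rule sum.cong[OF refl])
  also have "\<dots> = of_nat (card (Rng m \<inter> {i. \<bar>i\<bar> \<le> int m})) * (-1) ^ (a + b)"
    using fR by (simp add: sum.If_cases)
  also have "Rng m \<inter> {i. \<bar>i\<bar> \<le> int m} = {- int m..int m}" unfolding Rng_def by auto
  also have "card {- int m..int m} = 2 * m + 1" by simp
  finally show ?thesis using 1 by simp
qed

lemma Xt_p:
  assumes a: "a \<ge> 1" and b: "b \<ge> 1" and D: "a + b \<le> D"
  shows "Xt D (Vf D (p a b)) = - ((-1) ^ (a + b))"
proof -
  have "Xt D (Vf D (p a b)) = Xt D (\<lambda>m. (-1) ^ (a + b) * (2 * of_nat m + 1))"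
    by (rule arg_cong[where f = "Xt D"], rule ext) (simp add: Vf_p[OF a b D] mult.commute)
  also have "\<dots> = (-1) ^ (a + b) * Xt D (\<lambda>m. 2 * of_nat m + 1)" by (rule Xt_cmult)
  also have "Xt D (\<lambda>m. 2 * of_nat m + 1 :: rat poly) = -1"
  proof -
    have d1: "D \<ge> 1" using a b D by simp
    have "Xt D (\<lambda>m. 2 * of_nat m + 1 :: rat poly) = 2 * Xt D (\<lambda>m. of_nat m) + Xt D (\<lambda>m. 1)"
      by (simp add: Xt_add Xt_cmult)
    also have "\<dots> = -1" using Xt_id[OF d1, where 'a = "rat poly"] by (simp add: Xt_const)
    finally show ?thesis .
  qed
  finally show ?thesis by simp
qed

lemma lc_list: "length cs = length Ps \<Longrightarrow>
  lin_comb Ps cs m = sum_list (map (\<lambda>(c,P). c * Y P m) (zip cs Ps))"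
  unfolding lin_comb_def by (simp add: sum_list_sum_nth atLeast0LessThan)

lemma inY_Y: "signed_poset P \<Longrightarrow> inY (Y P)"
  unfolding inY_def
  by (rule exI[of _ "[P]"], rule exI[of _ "[1]"]) (auto simp: lin_comb_def)

lemma sum_list_neg_zip:
  "sum_list (map (\<lambda>(c,P). c * Y P M) (zip (map uminus ds) Qs)) = - sum_list (map (\<lambda>(c,P). c * Y P M) (zip ds Qs))"
proof (induction ds arbitrary: Qs)
  case (Cons d ds)
  then show ?case by (cases Qs) auto
qed simp

lemma inY_diff:
  assumes "inY f" "inY g"
  shows "inY (\<lambda>M. f M - g M)"
proof -
  obtain Ps cs where 1: "\<forall>P\<in>set Ps. signed_poset P" "length cs = length Ps" "f = lin_comb Ps cs"
    using assms(1) unfolding inY_def by blast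
  obtain Qs ds where 2: "\<forall>P\<in>set Qs. signed_poset P" "length ds = length Qs" "g = lin_comb Qs ds"
    using assms(2) unfolding inY_def by blast
  have "(\<lambda>M. f M - g M) = lin_comb (Ps @ Qs) (cs @ map uminus ds)"
  proof
    fix M
    have "lin_comb (Ps @ Qs) (cs @ map uminus ds) M =
       sum_list (map (\<lambda>(c,P). c * Y P M) (zip cs Ps)) + sum_list (map (\<lambda>(c,P). c * Y P M) (zip (map uminus ds) Qs))"
      using 1(2) 2(2) by (simp add: lc_list)
    also have "sum_list (map (\<lambda>(c,P). c * Y P M) (zip (map uminus ds) Qs)) = - sum_list (map (\<lambda>(c,P). c * Y P M) (zip ds Qs))"
      by (rule sum_list_neg_zip)
    finally show "f M - g M = lin_comb (Ps @ Qs) (cs @ map uminus ds) M"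
      using 1 2 by (simp add: lc_list)
  qed
  then show ?thesis unfolding inY_def using 1 2
    by (intro exI[of _ "Ps @ Qs"] exI[of _ "cs @ map uminus ds"]) auto
qed

definition edg :: "nat \<Rightarrow> nat \<Rightarrow> bool \<Rightarrow> sedge" where
  "edg a j d = (j, Suc j, j \<noteq> a - 1, d, if j \<noteq> a - 1 then \<not> d else d)"

lemma edg_simps: "e_u (edg a j d) = j" "e_w (edg a j d) = Suc j" "e_pos (edg a j d) = (j \<noteq> a - 1)"
  "e_au (edg a j d) = d" "e_aw (edg a j d) = (if j \<noteq> a - 1 then \<not> d else d)"
  unfolding edg_def e_u_def e_w_def e_pos_def e_au_def e_aw_def by simp_all

definition sat :: "sedge \<Rightarrow> int list \<Rightarrow> bool" where
  "sat e k \<longleftrightarrow> k ! e_u e \<noteq> e_sgn e * k ! e_w e \<and> (e_au e \<longleftrightarrow> k ! e_u e > e_sgn e * k ! e_w e) \<and>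
     (e_aw e \<longleftrightarrow> k ! e_w e > e_sgn e * k ! e_u e)"

definition rel :: "nat \<Rightarrow> int list \<Rightarrow> nat \<Rightarrow> bool" where
  "rel a k j \<longleftrightarrow> (if j = a - 1 then k ! j = - (k ! Suc j) else k ! j = k ! Suc j)"

lemma trich: "rel a k j \<longleftrightarrow> \<not> sat (edg a j True) k \<and> \<not> sat (edg a j False) k"
  "\<not> (sat (edg a j True) k \<and> sat (edg a j False) k)"
  unfolding rel_def sat_def e_sgn_def edg_simps by auto

lemma pp_sat: "proper (N, Es) k \<and> preserves (N, Es) k \<longleftrightarrow> length k = N \<and> (\<forall>e\<in>set Es. sat e k)"
  unfolding proper_def preserves_def sat_def by auto

definition cnt :: "nat \<Rightarrow> nat \<Rightarrow> sedge list \<Rightarrow> nat set \<Rightarrow> int multiset \<Rightarrow> nat" where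
  "cnt a N Es J M = card {k. length k = N \<and> (\<forall>e\<in>set Es. sat e k) \<and> (\<forall>j\<in>J. rel a k j) \<and> mset k = M}"

lemma fin_cnt: "finite {k. length k = N \<and> Q k \<and> mset k = M}"
proof (rule finite_subset)
  show "{k. length k = N \<and> Q k \<and> mset k = M} \<subseteq> {k. set k \<subseteq> set_mset M \<and> length k = N}" by auto
  show "finite {k. set k \<subseteq> set_mset M \<and> length k = N}" by (rule finite_lists_length_eq) simp
qed

lemma cnt_split:
  "(of_nat (cnt a N Es (insert j J) M) :: rat) =
    of_nat (cnt a N Es J M) - of_nat (cnt a N (edg a j True # Es) J M) - of_nat (cnt a N (edg a j False # Es) J M)"
proof -
  define A where "A = {k. length k = N \<and> ((\<forall>e\<in>set Es. sat e k) \<and> (\<forall>j\<in>J. rel a k j)) \<and> mset k = M}"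
  have fA: "finite A" unfolding A_def by (rule fin_cnt)
  define A1 where "A1 = {k\<in>A. rel a k j}"
  define A2 where "A2 = {k\<in>A. sat (edg a j True) k}"
  define A3 where "A3 = {k\<in>A. sat (edg a j False) k}"
  have U: "A = A1 \<union> (A2 \<union> A3)" unfolding A1_def A2_def A3_def using trich(1) by blast
  have d1: "A1 \<inter> (A2 \<union> A3) = {}" unfolding A1_def A2_def A3_def using trich(1) by blast
  have d2: "A2 \<inter> A3 = {}" unfolding A2_def A3_def using trich(2) by blast
  have f: "finite A1" "finite A2" "finite A3" unfolding A1_def A2_def A3_def using fA by auto
  have "card A = card A1 + (card A2 + card A3)"
    using U d1 d2 f by (simp add: card_Un_disjoint)
  moreover have "cnt a N Es J M = card A" unfolding cnt_def A_def by simp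
  moreover have "cnt a N Es (insert j J) M = card A1" unfolding cnt_def A1_def A_def
    by (rule arg_cong[where f = card]) auto
  moreover have "cnt a N (edg a j True # Es) J M = card A2" unfolding cnt_def A2_def A_def
    by (rule arg_cong[where f = card]) auto
  moreover have "cnt a N (edg a j False # Es) J M = card A3" unfolding cnt_def A3_def A_def
    by (rule arg_cong[where f = card]) auto
  ultimately show ?thesis by simp
qed

definition pl :: "nat \<Rightarrow> nat \<Rightarrow> sedge list \<Rightarrow> bool" where
  "pl a N Es \<longleftrightarrow> (\<forall>e\<in>set Es. \<exists>j d. Suc j < N \<and> e = edg a j d) \<and>
     (\<forall>e1\<in>set Es. \<forall>e2\<in>set Es. e_u e1 = e_u e2 \<longrightarrow> e1 = e2)"

lemma pl_acyc:
  assumes pl: "pl a N Es" and cyc: "is_cycle (N, Es) vs es"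
  shows False
proof -
  have cw: "vs \<noteq> []" "length es = length vs"
    "\<forall>i<length vs. es ! i < length Es \<and> connects (Es ! (es ! i)) (vs ! i) (vs ! (Suc i mod length vs))"
    using cyc unfolding is_cycle_def closed_walk_def by auto
  define v where "v = Min (set vs)"
  have v: "v \<in> set vs" unfolding v_def using cw(1) by simp
  have vmin: "\<And>x. x \<in> set vs \<Longrightarrow> v \<le> x" unfolding v_def by simp
  have ends: "e_u (Es ! j) \<in> set vs \<and> e_w (Es ! j) \<in> set vs \<and> Es ! j \<in> set Es" if j: "j \<in> set es" for j
  proof -
    obtain t where t: "t < length es" "es ! t = j" using j by (metis in_set_conv_nth)
    have tl: "t < length vs" using t cw(2) by simp
    have "Suc t mod length vs < length vs" using cw(1) by simp
    then have "vs ! t \<in> set vs" "vs ! (Suc t mod length vs) \<in> set vs" using tl by auto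
    moreover have "es ! t < length Es" "connects (Es ! j) (vs ! t) (vs ! (Suc t mod length vs))"
      using cw(3) tl t by auto
    ultimately show ?thesis unfolding connects_def using t by auto
  qed
  have shape: "e_w e = Suc (e_u e)" if "e \<in> set Es" for e
    using pl that unfolding pl_def by (auto simp: edg_simps)
  obtain j1 where j1: "j1 \<in> set es" "arrow_in v (Es ! j1)" using cyc v unfolding is_cycle_def by auto
  obtain j2 where j2: "j2 \<in> set es" "arrow_out v (Es ! j2)" using cyc v unfolding is_cycle_def by auto
  have u1: "e_u (Es ! j1) = v \<and> e_au (Es ! j1)"
  proof -
    have "e_w (Es ! j1) \<noteq> v"
    proof
      assume "e_w (Es ! j1) = v"
      then have "e_u (Es ! j1) < v" using shape[of "Es ! j1"] ends[OF j1(1)] by simp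
      then show False using vmin ends[OF j1(1)] by force
    qed
    then show ?thesis using j1(2) unfolding arrow_in_def by auto
  qed
  have u2: "e_u (Es ! j2) = v \<and> \<not> e_au (Es ! j2)"
  proof -
    have "e_w (Es ! j2) \<noteq> v"
    proof
      assume "e_w (Es ! j2) = v"
      then have "e_u (Es ! j2) < v" using shape[of "Es ! j2"] ends[OF j2(1)] by simp
      then show False using vmin ends[OF j2(1)] by force
    qed
    then show ?thesis using j2(2) unfolding arrow_out_def by auto
  qed
  have "Es ! j1 = Es ! j2" using pl ends[OF j1(1)] ends[OF j2(1)] u1 u2 unfolding pl_def by metis
  then show False using u1 u2 by simp
qed

lemma pl_sp: "pl a N Es \<Longrightarrow> signed_poset (N, Es)"
  unfolding signed_poset_def
proof (intro conjI notI)
  assume pl: "pl a N Es"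
  show "is_oriented (N, Es)" unfolding is_oriented_def
  proof
    fix e assume "e \<in> set (snd (N, Es))"
    then obtain j d where "Suc j < N" "e = edg a j d" using pl unfolding pl_def by auto
    then show "e_u e < fst (N, Es) \<and> e_w e < fst (N, Es) \<and>
        (if e_pos e then e_au e \<noteq> e_aw e else e_au e = e_aw e)" by (auto simp: edg_simps)
  qed
  assume "\<exists>vs es. is_cycle (N, Es) vs es"
  then show False using pl_acyc[OF pl] by blast
qed

lemma main_ind:
  assumes fJ: "finite J"
  shows "\<forall>Es. pl a N Es \<and> (\<forall>e\<in>set Es. e_u e \<notin> J) \<and> (\<forall>j\<in>J. Suc j < N) \<longrightarrow>
           inY (\<lambda>M. of_nat (cnt a N Es J M))"
  using fJ
proof (induction J rule: finite_induct)
  case empty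
  show ?case
  proof (intro allI impI)
    fix Es assume "pl a N Es \<and> (\<forall>e\<in>set Es. e_u e \<notin> {}) \<and> (\<forall>j\<in>{}. Suc j < N)"
    then have sp: "signed_poset (N, Es)" using pl_sp by blast
    have st: "{k. proper (N,Es) k \<and> preserves (N,Es) k \<and> mset k = M} =
       {k. length k = N \<and> (\<forall>e\<in>set Es. sat e k) \<and> (\<forall>j\<in>{}. rel a k j) \<and> mset k = M}" for M
      using pp_sat[of N Es] by blast
    have "(\<lambda>M. of_nat (cnt a N Es {} M)) = Y (N, Es)"
      unfolding Y_def cnt_def st by simp
    then show "inY (\<lambda>M. of_nat (cnt a N Es {} M))" using inY_Y[OF sp] by simp
  qed
next
  case (insert j J)
  show ?case
  proof (intro allI impI)
    fix Es assume h: "pl a N Es \<and> (\<forall>e\<in>set Es. e_u e \<notin> insert j J) \<and> (\<forall>j'\<in>insert j J. Suc j' < N)"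
    have new: "pl a N (edg a j d # Es) \<and> (\<forall>e\<in>set (edg a j d # Es). e_u e \<notin> J) \<and> (\<forall>j'\<in>J. Suc j' < N)" for d
    proof -
      have "pl a N (edg a j d # Es)" using h unfolding pl_def by (auto simp: edg_simps)
      then show ?thesis using h insert.hyps(2) by (auto simp: edg_simps)
    qed
    have old: "pl a N Es \<and> (\<forall>e\<in>set Es. e_u e \<notin> J) \<and> (\<forall>j'\<in>J. Suc j' < N)" using h by auto
    have i0: "inY (\<lambda>M. of_nat (cnt a N Es J M))" using insert.IH old by blast
    have i1: "inY (\<lambda>M. of_nat (cnt a N (edg a j True # Es) J M))" using insert.IH new by blast
    have i2: "inY (\<lambda>M. of_nat (cnt a N (edg a j False # Es) J M))" using insert.IH new by blast
    have "(\<lambda>M. of_nat (cnt a N Es (insert j J) M) :: rat) =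
      (\<lambda>M. (of_nat (cnt a N Es J M) - of_nat (cnt a N (edg a j True # Es) J M)) - of_nat (cnt a N (edg a j False # Es) J M))"
      using cnt_split by simp
    then show "inY (\<lambda>M. of_nat (cnt a N Es (insert j J) M))"
      using inY_diff[OF inY_diff[OF i0 i1] i2] by simp
  qed
qed

definition rp :: "nat \<Rightarrow> nat \<Rightarrow> int \<Rightarrow> int list" where
  "rp a b i = replicate a i @ replicate b (- i)"

lemma rp_nth: "t < a + b \<Longrightarrow> rp a b i ! t = (if t < a then i else - i)"
  unfolding rp_def by (simp add: nth_append)

lemma rp_rel: "a \<ge> 1 \<Longrightarrow> j \<in> {0..<a + b - 1} \<Longrightarrow> rel a (rp a b i) j"
  unfolding rel_def by (auto simp: rp_nth)

lemma rel_shape: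
  assumes a: "a \<ge> 1" and len: "length k = a + b" and r: "\<forall>j\<in>{0..<a + b - 1}. rel a k j"
  shows "k = rp a b (k ! 0)"
proof -
  have "t < a + b \<longrightarrow> k ! t = (if t < a then k ! 0 else - (k ! 0))" for t
  proof (induction t)
    case 0 then show ?case using a by simp
  next
    case (Suc t)
    show ?case
    proof
      assume t: "Suc t < a + b"
      then have "rel a k t" using r by auto
      moreover have "k ! t = (if t < a then k ! 0 else - (k ! 0))" using Suc t by simp
      ultimately show "k ! Suc t = (if Suc t < a then k ! 0 else - (k ! 0))"
        unfolding rel_def using a by (auto split: if_splits)
    qed
  qed
  then show ?thesis using len by (auto simp: list_eq_iff_nth_eq rp_nth) (simp add: rp_def)
qed

lemma p_cnt:
  assumes a: "a \<ge> 1"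
  shows "p a b = (\<lambda>M. of_nat (cnt a (a + b) [] {0..<a + b - 1} M))"
proof
  fix M
  have "bij_betw (rp a b) {i. Rp a b i = M} {k. length k = a + b \<and> (\<forall>e\<in>set []. sat e k) \<and> (\<forall>j\<in>{0..<a + b - 1}. rel a k j) \<and> mset k = M}"
  proof (rule bij_betw_byWitness[where f' = "\<lambda>k. k ! 0"])
    show "\<forall>x\<in>{i. Rp a b i = M}. rp a b x ! 0 = x" using a by (simp add: rp_nth)
    show "\<forall>k\<in>{k. length k = a + b \<and> (\<forall>e\<in>set []. sat e k) \<and> (\<forall>j\<in>{0..<a + b - 1}. rel a k j) \<and> mset k = M}.
        rp a b (k ! 0) = k" using rel_shape[OF a] by auto
    show "rp a b ` {i. Rp a b i = M} \<subseteq> {k. length k = a + b \<and> (\<forall>e\<in>set []. sat e k) \<and> (\<forall>j\<in>{0..<a + b - 1}. rel a k j) \<and> mset k = M}"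
      using rp_rel[OF a] by (auto simp: rp_def Rp_def)
    show "(\<lambda>k. k ! 0) ` {k. length k = a + b \<and> (\<forall>e\<in>set []. sat e k) \<and> (\<forall>j\<in>{0..<a + b - 1}. rel a k j) \<and> mset k = M}
        \<subseteq> {i. Rp a b i = M}"
    proof
      fix i assume "i \<in> (\<lambda>k. k ! 0) ` {k. length k = a + b \<and> (\<forall>e\<in>set []. sat e k) \<and> (\<forall>j\<in>{0..<a + b - 1}. rel a k j) \<and> mset k = M}"
      then obtain k where k: "i = k ! 0" "length k = a + b" "\<forall>j\<in>{0..<a + b - 1}. rel a k j" "mset k = M" by auto
      have "k = rp a b i" using rel_shape[OF a k(2,3)] k(1) by simp
      then show "i \<in> {i. Rp a b i = M}" using k(4) by (simp add: rp_def Rp_def)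
    qed
  qed
  then have "card {i. Rp a b i = M} = cnt a (a + b) [] {0..<a + b - 1} M"
    unfolding cnt_def by (rule bij_betw_same_card)
  then show "p a b M = of_nat (cnt a (a + b) [] {0..<a + b - 1} M)"
    unfolding p_def Rp_def by simp
qed

lemma inY_p:
  assumes a: "a \<ge> 1"
  shows "inY (p a b)"
proof -
  have "pl a (a + b) []" unfolding pl_def by simp
  then have "inY (\<lambda>M. of_nat (cnt a (a + b) [] {0..<a + b - 1} M))"
    using main_ind[of "{0..<a + b - 1}" a "a + b"] by auto
  then show ?thesis using p_cnt[OF a] by simp
qed

theorem theorem6p7:
  fixes a b :: nat
  assumes "a \<ge> 1" and "b \<ge> 1"
  shows "phi (p a b) = - ((-1) ^ (a + b))"
proof -
  have val: "- ((-1) ^ (a + b)) = (\<Sum>j<length Ps. monom (cs ! j) (sinks (Ps ! j)))"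
    if h: "(\<forall>P\<in>set Ps. signed_poset P) \<and> length cs = length Ps \<and> p a b = lin_comb Ps cs" for Ps cs
  proof -
    define D where "D = a + b + sum_list (map fst Ps)"
    have D1: "a + b \<le> D" unfolding D_def by simp
    have D2: "\<forall>P\<in>set Ps. fst P \<le> D"
    proof
      fix P assume "P \<in> set Ps"
      then have "fst P \<le> sum_list (map fst Ps)" by (simp add: member_le_sum_list)
      then show "fst P \<le> D" unfolding D_def by simp
    qed
    have "- ((-1) ^ (a + b)) = Xt D (Vf D (p a b))" using Xt_p[OF assms D1] by simp
    also have "\<dots> = Xt D (Vf D (lin_comb Ps cs))" using h by simp
    also have "\<dots> = (\<Sum>j<length Ps. monom (cs ! j) (sinks (Ps ! j)))"
      using Xt_lin h D2 by blast
    finally show ?thesis .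
  qed
  obtain Ps0 cs0 where r0: "(\<forall>P\<in>set Ps0. signed_poset P) \<and> length cs0 = length Ps0 \<and> p a b = lin_comb Ps0 cs0"
    using inY_p[OF assms(1), of b] unfolding inY_def by blast
  show ?thesis unfolding phi_def
  proof (rule the_equality)
    show "\<forall>Ps cs. (\<forall>P\<in>set Ps. signed_poset P) \<and> length cs = length Ps \<and> p a b = lin_comb Ps cs \<longrightarrow>
        - ((-1) ^ (a + b)) = (\<Sum>j<length Ps. monom (cs ! j) (sinks (Ps ! j)))"
      using val by blast
  next
    fix q assume "\<forall>Ps cs. (\<forall>P\<in>set Ps. signed_poset P) \<and> length cs = length Ps \<and> p a b = lin_comb Ps cs \<longrightarrow>
        q = (\<Sum>j<length Ps. monom (cs ! j) (sinks (Ps ! j)))"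
    then have "q = (\<Sum>j<length Ps0. monom (cs0 ! j) (sinks (Ps0 ! j)))" using r0 by blast
    then show "q = - ((-1) ^ (a + b))" using val[OF r0] by simp
  qed
qed

end
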